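(* Let $N\ge1$ be odd and $\chi$ a primitive Dirichlet character modulo $N$. Then $\overline\gamma_\chi=\operatorname{Ind}_{\overline\Gamma_\theta\cap\overline\Gamma_0(N^2)}^{\overline\Gamma_0(N^2)}\overline\lambda_\chi^{-1}$ is an irreducible representation of $\overline\Gamma_0(N^2)$.
   Context: Hilbert symbol $(x,y)_{\mathbb R}=-1$ if $x<0,y<0$, else $1$. For $g=\begin{pmatrix}a&b\\c&d\end{pmatrix}\in SL_2(\mathbb R)$, $x(g)=d$ if $c=0$ and $x(g)=c$ otherwise; $\bar c(g_1,g_2)=(x(g_1),x(g_2))_{\mathbb R}(-x(g_1)x(g_2),x(g_1g_2))_{\mathbb R}$; $\overline{SL}_2(\mathbb R)=SL_2(\mathbb R)\times\{\pm1\}$ with $(g_1,\epsilon_1)(g_2,\epsilon_2)=(g_1g_2,\bar c(g_1,g_2)\epsilon_1\epsilon_2)$, and $\overline\Gamma$ denotes the preimage of $\Gamma$. Kronecker symbol with $\left(\frac01\right)=1,\left(\frac0{-1}\right)=-1$; $\epsilon_d=1$ or $i$ as $d\equiv1$ or $3\pmod4$. $\omega=\begin{pmatrix}0&-1\\1&0\end{pmatrix}$, $\Gamma(2)=\{g\in SL_2(\mathbb Z):g\equiv I\bmod2\}$, $\Gamma_\theta=\{ac\equiv bd\equiv0\bmod2\}=\Gamma(2)\sqcup\Gamma(2)\omega$, $\Gamma_0(M)=\{M\mid c\}$. $\lambda(r)=\left(\frac{2c}{d}\right)\epsilon_d^{-1}$ for $r\in\Gamma(2)$; for $r=r_1\omega$,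 $r_1=\begin{pmatrix}a_1&b_1\\c_1&d_1\end{pmatrix}\in\Gamma(2)$, $\lambda(r)=\left(\frac{2c_1}{d_1}\right)\epsilon_{d_1}^{-1}e^{-i\pi/4}(-c_1,d_1)_{\mathbb R}$. The character $\overline\lambda_\chi$ of $\overline\Gamma_\theta\cap\overline\Gamma_0(N^2)$ is $\overline\lambda_\chi((r,\epsilon))=\lambda(r)\chi(d)\epsilon$ for $r=\begin{pmatrix}a&b\\c&d\end{pmatrix}$. *)

theory Defs
  imports Complex_Main "HOL-Number_Theory.Number_Theory"
begin

section \<open>Integer 2x2 matrices, written (a,b,c,d) for [[a,b],[c,d]]\<close>

type_synonym mat2 = "int \<times> int \<times> int \<times> int"

fun m2mult :: "mat2 \<Rightarrow> mat2 \<Rightarrow> mat2" where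
  "m2mult (a1,b1,c1,d1) (a2,b2,c2,d2) =
     (a1*a2 + b1*c2, a1*b2 + b1*d2, c1*a2 + d1*c2, c1*b2 + d1*d2)"

definition omega :: mat2 where "omega = (0, -1, 1, 0)"
definition omega_inv :: mat2 where "omega_inv = (0, 1, -1, 0)"

fun in_SL2Z :: "mat2 \<Rightarrow> bool" where
  "in_SL2Z (a,b,c,d) \<longleftrightarrow> a*d - b*c = 1"

definition hilbert_R :: "int \<Rightarrow> int \<Rightarrow> int" where
  "hilbert_R x y = (if x < 0 \<and> y < 0 then -1 else 1)"

fun xfun :: "mat2 \<Rightarrow> int" where
  "xfun (a,b,c,d) = (if c = 0 then d else c)"

definition cocycle :: "mat2 \<Rightarrow> mat2 \<Rightarrow> int" where
  "cocycle g1 g2 = hilbert_R (xfun g1) (xfun g2) *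
                   hilbert_R (- (xfun g1 * xfun g2)) (xfun (m2mult g1 g2))"

fun mp_mult :: "mat2 \<times> int \<Rightarrow> mat2 \<times> int \<Rightarrow> mat2 \<times> int" where
  "mp_mult (g1, e1) (g2, e2) = (m2mult g1 g2, cocycle g1 g2 * e1 * e2)"

definition mp_Gamma0 :: "nat \<Rightarrow> (mat2 \<times> int) set" where
  "mp_Gamma0 M = {((a,b,c,d), e). a*d - b*c = 1 \<and> int M dvd c \<and> (e = 1 \<or> e = -1)}"

definition mp_Gamma_theta0 :: "nat \<Rightarrow> (mat2 \<times> int) set" where
  "mp_Gamma_theta0 M = {((a,b,c,d), e). ((a,b,c,d), e) \<in> mp_Gamma0 M \<and>
                         even (a*c) \<and> even (b*d)}"

section \<open>Kronecker symbol (with the conventions (0/1)=1, (0/-1)=-1)\<close>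

definition kron2 :: "int \<Rightarrow> int" where
  "kron2 a = (if even a then 0 else if a mod 8 = 1 \<or> a mod 8 = 7 then 1 else -1)"

definition kronecker :: "int \<Rightarrow> int \<Rightarrow> int" where
  "kronecker a n =
    (if n = 0 then (if \<bar>a\<bar> = 1 then 1 else 0)
     else (if n < 0 \<and> a \<le> 0 then -1 else 1) *
          (\<Prod>p\<in>prime_factors (nat \<bar>n\<bar>).
              (if p = 2 then kron2 a else Legendre a (int p)) ^ multiplicity p (nat \<bar>n\<bar>)))"

definition eps :: "int \<Rightarrow> complex" where
  "eps d = (if d mod 4 = 1 then 1 else \<i>)"

fun theta_lambda :: "mat2 \<Rightarrow> complex" where
  "theta_lambda (a,b,c,d) =
     (if even c then of_int (kronecker (2*c) d) * inverse (eps d)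
      else (case m2mult (a,b,c,d) omega_inv of (a1,b1,c1,d1) \<Rightarrow>
              of_int (kronecker (2*c1) d1) * inverse (eps d1) * cis (- pi / 4)
              * of_int (hilbert_R (-c1) d1)))"

fun lambda_bar :: "(int \<Rightarrow> complex) \<Rightarrow> mat2 \<times> int \<Rightarrow> complex" where
  "lambda_bar \<chi> ((a,b,c,d), e) = theta_lambda (a,b,c,d) * \<chi> d * of_int e"

definition dirichlet_character :: "nat \<Rightarrow> (int \<Rightarrow> complex) \<Rightarrow> bool" where
  "dirichlet_character N \<chi> \<longleftrightarrow> N > 0 \<and>
     (\<forall>n. \<chi> (n + int N) = \<chi> n) \<and>
     (\<forall>m n. \<chi> (m * n) = \<chi> m * \<chi> n) \<and>
     \<chi> 1 = 1 \<and>
     (\<forall>n. \<chi> n = 0 \<longleftrightarrow> \<not> coprime n (int N))"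

definition primitive_dirichlet_character :: "nat \<Rightarrow> (int \<Rightarrow> complex) \<Rightarrow> bool" where
  "primitive_dirichlet_character N \<chi> \<longleftrightarrow> dirichlet_character N \<chi> \<and>
     \<not> (\<exists>M::nat. 0 < M \<and> M dvd N \<and> M < N \<and>
          (\<forall>n. coprime n (int N) \<and> [n = 1] (mod int M) \<longrightarrow> \<chi> n = 1))"

definition ind_space ::
  "'g set \<Rightarrow> ('g \<Rightarrow> 'g \<Rightarrow> 'g) \<Rightarrow> 'g set \<Rightarrow> ('g \<Rightarrow> complex) \<Rightarrow> ('g \<Rightarrow> complex) set" where
  "ind_space G gmul H \<sigma> = {f. (\<forall>x. x \<notin> G \<longrightarrow> f x = 0) \<and>
       (\<forall>h\<in>H. \<forall>g\<in>G. f (gmul h g) = \<sigma> h * f g)}"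

definition right_transl :: "'g set \<Rightarrow> ('g \<Rightarrow> 'g \<Rightarrow> 'g) \<Rightarrow> 'g \<Rightarrow> ('g \<Rightarrow> complex) \<Rightarrow> ('g \<Rightarrow> complex)" where
  "right_transl G gmul g f = (\<lambda>x. if x \<in> G then f (gmul x g) else 0)"

definition invariant_subspace ::
  "'g set \<Rightarrow> ('g \<Rightarrow> 'g \<Rightarrow> 'g) \<Rightarrow> ('g \<Rightarrow> complex) set \<Rightarrow> ('g \<Rightarrow> complex) set \<Rightarrow> bool" where
  "invariant_subspace G gmul V W \<longleftrightarrow> W \<subseteq> V \<and> (\<lambda>_. 0) \<in> W \<and>
     (\<forall>f\<in>W. \<forall>f'\<in>W. (\<lambda>x. f x + f' x) \<in> W) \<and>
     (\<forall>c::complex. \<forall>f\<in>W. (\<lambda>x. c * f x) \<in> W) \<and>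
     (\<forall>g\<in>G. \<forall>f\<in>W. right_transl G gmul g f \<in> W)"

definition irreducible_ind_rep ::
  "'g set \<Rightarrow> ('g \<Rightarrow> 'g \<Rightarrow> 'g) \<Rightarrow> 'g set \<Rightarrow> ('g \<Rightarrow> complex) \<Rightarrow> bool" where
  "irreducible_ind_rep G gmul H \<sigma> \<longleftrightarrow>
     (let V = ind_space G gmul H \<sigma> in
       V \<noteq> {\<lambda>_. 0} \<and>
       (\<forall>W. invariant_subspace G gmul V W \<longrightarrow> W = {\<lambda>_. 0} \<or> W = V))"

end

theory Submission
  imports Defs
begin

lemma Legendre_vals: "Legendre a p = 0 \<or> Legendre a p = 1 \<or> Legendre a p = -1"
  by (auto simp: Legendre_def)

lemma Legendre_cong:
  assumes "[a = b] (mod p)" shows "Legendre a p = Legendre b p"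
proof -
  have 1: "[a = 0] (mod p) \<longleftrightarrow> [b = 0] (mod p)"
    using assms cong_sym cong_trans by blast
  have 2: "QuadRes p a \<longleftrightarrow> QuadRes p b"
    unfolding QuadRes_def using assms cong_sym cong_trans by blast
  show ?thesis unfolding Legendre_def using 1 2 by simp
qed

lemma small_cong_eq:
  fixes x y :: int and p :: nat
  assumes "[x = y] (mod int p)" "p > 2" "x \<in> {-1,0,1}" "y \<in> {-1,0,1}"
  shows "x = y"
proof (rule ccontr)
  assume ne: "x \<noteq> y"
  have "int p dvd (x - y)" using assms(1) by (simp add: cong_iff_dvd_diff cong_sym_eq)
  then have "\<bar>int p\<bar> \<le> \<bar>x - y\<bar>" using ne by (intro dvd_imp_le_int) auto
  moreover have "\<bar>x - y\<bar> \<le> 2" using assms by auto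
  ultimately show False using assms(2) by simp
qed

lemma Legendre_mult:
  assumes "prime p" "p > 2"
  shows "Legendre (a*b) (int p) = Legendre a p * Legendre b p"
proof -
  have "[Legendre (a*b) p = (a*b) ^ ((p - 1) div 2)] (mod p)" using euler_criterion assms by blast
  moreover have "[Legendre a p * Legendre b p = a ^ ((p - 1) div 2) * b ^ ((p - 1) div 2)] (mod p)"
    using euler_criterion[OF assms, of a] euler_criterion[OF assms, of b] cong_mult by blast
  ultimately have "[Legendre (a*b) p = Legendre a p * Legendre b p] (mod p)"
    by (metis cong_sym cong_trans power_mult_distrib)
  moreover have "Legendre a p * Legendre b p \<in> {-1,0,1}"
    using Legendre_vals[of a p] Legendre_vals[of b p] by auto
  ultimately show ?thesis using small_cong_eq assms Legendre_vals[of "a*b" p] by blast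
qed

lemma Legendre_neg1:
  assumes "prime p" "p > 2"
  shows "Legendre (-1) (int p) = (if p mod 4 = 1 then 1 else -1)"
proof -
  have c: "[Legendre (-1) p = (-1) ^ ((p - 1) div 2)] (mod p)" using euler_criterion assms by blast
  have op: "odd p" using assms prime_odd_nat by blast
  have "(-1::int) ^ ((p - 1) div 2) = (if p mod 4 = 1 then 1 else -1)"
  proof (cases "p mod 4 = 1")
    case True
    then have "even ((p - 1) div 2)" by presburger
    then show ?thesis using True by simp
  next
    case False
    with op have "odd ((p - 1) div 2)" by presburger
    then show ?thesis using False by simp
  qed
  with c have "[Legendre (-1) p = (if p mod 4 = 1 then 1 else -1)] (mod p)" by simp
  moreover have "(if p mod 4 = 1 then 1 else -1::int) \<in> {-1,0,1}" by auto
  ultimately show ?thesis using small_cong_eq[of _ _ p] assms Legendre_vals[of "-1" p] by blast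
qed

lemma Legendre_2:
  assumes "prime p" "p > 2"
  shows "Legendre 2 (int p) = (if p mod 8 = 1 \<or> p mod 8 = 7 then 1 else -1)"
proof -
  have op: "odd p" using assms prime_odd_nat by blast
  interpret G: GAUSS p 2
  proof
    show "[2 \<noteq> 0] (mod int p)"
    proof
      assume "[2 = 0] (mod int p)"
      then have "int p dvd 2" by (simp add: cong_0_iff)
      then have "p dvd 2" by presburger
      then show False using assms by (simp add: dvd_imp_le leD)
    qed
  qed (use assms in auto)
  define h where "h = (int p - 1) div 2"
  have hp: "2 * h = int p - 1" unfolding h_def using op by presburger
  have C: "G.C = (\<lambda>x. x * 2) ` {0<..h}"
  proof -
    have "G.C = (\<lambda>x. (x * 2) mod int p) ` {0<..h}"
      unfolding G.C_def G.B_def G.A_def h_def by (simp add: image_image)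
    also have "\<dots> = (\<lambda>x. x * 2) ` {0<..h}"
      by (rule image_cong[OF refl]) (use hp in auto)
    finally show ?thesis .
  qed
  have E: "G.E = (\<lambda>x. x * 2) ` {h div 2 + 1..h}"
    unfolding G.E_def C h_def[symmetric] by (auto simp: image_iff)
  have "card G.E = nat (h - h div 2)"
    unfolding E by (subst card_image) (auto simp: inj_on_def)
  moreover have "Legendre 2 (int p) = (-1) ^ card G.E" by (rule G.gauss_lemma)
  ultimately have L: "Legendre 2 (int p) = (-1) ^ nat (h - h div 2)" by simp
  show ?thesis
  proof -
    have "p mod 8 = 1 \<or> p mod 8 = 3 \<or> p mod 8 = 5 \<or> p mod 8 = 7" using op by presburger
    moreover have nn: "0 \<le> h - h div 2" using hp by linarith
    have e: "even (nat (h - h div 2)) \<longleftrightarrow> even (h - h div 2)" using nn by (simp add: even_nat_iff)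
    have "int p mod 8 = 1 \<Longrightarrow> even (h - h div 2)" using hp by presburger
    moreover have "int p mod 8 = 7 \<Longrightarrow> even (h - h div 2)" using hp by presburger
    moreover have "int p mod 8 = 3 \<Longrightarrow> odd (h - h div 2)" using hp by presburger
    moreover have "int p mod 8 = 5 \<Longrightarrow> odd (h - h div 2)" using hp by presburger
    moreover have "int p mod 8 = int (p mod 8)" by (simp add: zmod_int)
    ultimately show ?thesis using L e by auto
  qed
qed


definition jac :: "int \<Rightarrow> nat \<Rightarrow> int" where
  "jac a m = prod_mset (image_mset (\<lambda>p. Legendre a (int p)) (prime_factorization m))"

lemma jac_1[simp]: "jac a 1 = 1" by (simp add: jac_def)

lemma jac_Suc0[simp]: "jac a (Suc 0) = 1" by (simp add: jac_def)

lemma Legendre_1: "p > 1 \<Longrightarrow> Legendre 1 p = 1"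
proof -
  assume "p > 1"
  then have "\<not> [1 = 0] (mod p)" by (auto simp: cong_0_iff zdvd_not_zless)
  moreover have "QuadRes p 1" unfolding QuadRes_def by (rule exI[of _ 1]) simp
  ultimately show ?thesis by (simp add: Legendre_def)
qed

lemma jac_one_top[simp]: "jac 1 m = 1"
  unfolding jac_def
proof (rule prod_mset.neutral)
  have "\<And>x. x \<in># prime_factorization m \<Longrightarrow> 1 < x"
    by (metis in_prime_factors_imp_prime prime_gt_1_nat)
  then show "\<forall>x\<in>#image_mset (\<lambda>p. Legendre 1 (int p)) (prime_factorization m). x = 1"
    by (auto intro!: Legendre_1)
qed

lemma jac_prime: "prime p \<Longrightarrow> jac a p = Legendre a (int p)"
  by (simp add: jac_def prime_factorization_prime)

lemma jac_mult: "m > 0 \<Longrightarrow> n > 0 \<Longrightarrow> jac a (m*n) = jac a m * jac a n"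
  by (simp add: jac_def prime_factorization_mult)

lemma jac_alt: "m > 0 \<Longrightarrow> jac a m = (\<Prod>p\<in>prime_factors m. Legendre a (int p) ^ multiplicity p m)"
  unfolding jac_def image_prod_mset_multiplicity
  by (intro prod.cong refl) (auto simp: count_prime_factorization_prime in_prime_factors_imp_prime)

definition sgk :: "int \<Rightarrow> int \<Rightarrow> int" where
  "sgk a n = (if n < 0 \<and> a \<le> 0 then -1 else 1)"

lemma kron_odd:
  assumes "odd n"
  shows "kronecker a n = sgk a n * jac a (nat \<bar>n\<bar>)"
proof -
  have n0: "n \<noteq> 0" using assms by auto
  have "nat \<bar>n\<bar> > 0" using n0 by simp
  have o: "odd (nat \<bar>n\<bar>)" using assms by (simp add: even_nat_iff)
  have "(\<Prod>p\<in>prime_factors (nat \<bar>n\<bar>).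
              (if p = 2 then kron2 a else Legendre a (int p)) ^ multiplicity p (nat \<bar>n\<bar>)) =
        (\<Prod>p\<in>prime_factors (nat \<bar>n\<bar>). Legendre a (int p) ^ multiplicity p (nat \<bar>n\<bar>))"
  proof (intro prod.cong refl)
    fix p assume "p \<in> prime_factors (nat \<bar>n\<bar>)"
    then have "p dvd nat \<bar>n\<bar>" by auto
    then have "p \<noteq> 2" using o by auto
    then show "(if p = 2 then kron2 a else Legendre a (int p)) ^ multiplicity p (nat \<bar>n\<bar>) =
          Legendre a (int p) ^ multiplicity p (nat \<bar>n\<bar>)" by simp
  qed
  then show ?thesis unfolding kronecker_def sgk_def using n0 jac_alt[OF \<open>nat \<bar>n\<bar> > 0\<close>] by simp
qed

lemma odd_induct[consumes 1, case_names one factor]: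
  fixes m :: nat
  assumes "odd m" "P 1" "\<And>p x. prime p \<Longrightarrow> p > 2 \<Longrightarrow> odd x \<Longrightarrow> P x \<Longrightarrow> P (p * x)"
  shows "P m"
  using assms(1)
proof (induction m rule: prime_divisors_induct)
  case zero then show ?case by simp
next
  case (unit x) then show ?case using assms(2) by simp
next
  case (factor p x)
  then have "odd p" "odd x" by auto
  then have "p > 2" using factor(1) prime_ge_2_nat[of p] by (metis le_neq_implies_less even_numeral)
  then show ?case using factor assms(3) \<open>odd x\<close> by blast
qed

lemma jac_mult_top:
  assumes "odd m" shows "jac (a*b) m = jac a m * jac b m"
  using assms
proof (induction m rule: odd_induct)
  case one then show ?case by simp
next
  case (factor p x)
  have "x > 0" using factor by (intro odd_pos)
  then show ?case using factor by (simp add: jac_mult jac_prime Legendre_mult prime_gt_0_nat)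
qed

lemma jac_cong:
  assumes "odd m" "[a = b] (mod int m)" shows "jac a m = jac b m"
  using assms
proof (induction m rule: odd_induct)
  case one then show ?case by simp
next
  case (factor p x)
  have "x > 0" using factor by (intro odd_pos)
  have "[a = b] (mod int p)" "[a = b] (mod int x)" using factor(5)
    by (auto intro: cong_dvd_modulus)
  then show ?case using factor \<open>x > 0\<close> by (simp add: jac_mult jac_prime Legendre_cong prime_gt_0_nat)
qed

definition s4 :: "nat \<Rightarrow> int" where "s4 m = (if m mod 4 = 1 then 1 else -1)"
definition s8 :: "nat \<Rightarrow> int" where "s8 m = (if m mod 8 = 1 \<or> m mod 8 = 7 then 1 else -1)"

lemma s4_mult: "odd m \<Longrightarrow> odd n \<Longrightarrow> s4 (m*n) = s4 m * s4 n"
proof -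
  assume "odd m" "odd n"
  then have "m mod 4 = 1 \<or> m mod 4 = 3" "n mod 4 = 1 \<or> n mod 4 = 3" by presburger+
  moreover have "(m*n) mod 4 = ((m mod 4) * (n mod 4)) mod 4" by (simp add: mod_mult_eq)
  ultimately show ?thesis unfolding s4_def by auto
qed

lemma s8_mult: "odd m \<Longrightarrow> odd n \<Longrightarrow> s8 (m*n) = s8 m * s8 n"
proof -
  assume "odd m" "odd n"
  then have "m mod 8 = 1 \<or> m mod 8 = 3 \<or> m mod 8 = 5 \<or> m mod 8 = 7"
     "n mod 8 = 1 \<or> n mod 8 = 3 \<or> n mod 8 = 5 \<or> n mod 8 = 7" by presburger+
  moreover have "(m*n) mod 8 = ((m mod 8) * (n mod 8)) mod 8" by (simp add: mod_mult_eq)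
  ultimately show ?thesis unfolding s8_def by auto
qed

lemma jac_neg1:
  assumes "odd m" shows "jac (-1) m = s4 m"
  using assms
proof (induction m rule: odd_induct)
  case one then show ?case by (simp add: s4_def)
next
  case (factor p x)
  have "x > 0" using factor by (intro odd_pos)
  have "odd p" using factor by (simp add: prime_odd_nat)
  have "jac (-1) (p*x) = jac (-1) p * jac (-1) x" using factor(1) \<open>x>0\<close> by (simp add: jac_mult prime_gt_0_nat)
  also have "jac (-1) p = s4 p" using factor(1,2) by (simp add: jac_prime Legendre_neg1 s4_def)
  also have "s4 p * jac (-1) x = s4 (p*x)" using factor(4) s4_mult[of p x] \<open>odd p\<close> factor(3) by simp
  finally show ?case .
qed

lemma jac_2:
  assumes "odd m" shows "jac 2 m = s8 m"
  using assms
proof (induction m rule: odd_induct)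
  case one then show ?case by (simp add: s8_def)
next
  case (factor p x)
  have "x > 0" using factor by (intro odd_pos)
  have "odd p" using factor by (simp add: prime_odd_nat)
  have "jac 2 (p*x) = jac 2 p * jac 2 x" using factor(1) \<open>x>0\<close> by (simp add: jac_mult prime_gt_0_nat)
  also have "jac 2 p = s8 p" using factor(1,2) by (simp add: jac_prime Legendre_2 s8_def)
  also have "s8 p * jac 2 x = s8 (p*x)" using factor(4) s8_mult[of p x] \<open>odd p\<close> factor(3) by simp
  finally show ?case .
qed

lemma jac_unit:
  assumes "odd m" "coprime a (int m)" shows "jac a m = 1 \<or> jac a m = -1"
  using assms
proof (induction m rule: odd_induct)
  case one then show ?case by simp
next
  case (factor p x)
  have "x > 0" using factor by (intro odd_pos)
  have cp: "coprime a (int p)" "coprime a (int x)" using factor(5) by auto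
  have "\<not> [a = 0] (mod int p)"
  proof
    assume "[a = 0] (mod int p)"
    then have "int p dvd a" by (simp add: cong_0_iff)
    then have "is_unit (int p)" using cp(1) by (meson coprime_common_divisor dvd_refl)
    then show False using factor(1) by simp
  qed
  then have "Legendre a (int p) = 1 \<or> Legendre a (int p) = -1" by (auto simp: Legendre_def)
  moreover have "jac a (p*x) = jac a p * jac a x" using factor(1) \<open>x>0\<close> by (simp add: jac_mult prime_gt_0_nat)
  moreover have "jac a p = Legendre a (int p)" using factor(1) by (simp add: jac_prime)
  moreover have "jac a x = 1 \<or> jac a x = -1" using factor(4) cp(2) by blast
  ultimately show ?case by auto
qed

definition rr :: "nat \<Rightarrow> nat \<Rightarrow> int" where
  "rr m n = (if m mod 4 = 3 \<and> n mod 4 = 3 then -1 else 1)"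

lemma rr_s4: "odd m \<Longrightarrow> odd n \<Longrightarrow> rr m n = (if s4 m = -1 \<and> s4 n = -1 then -1 else 1)"
  unfolding rr_def s4_def by presburger

lemma rr_mult: "odd m1 \<Longrightarrow> odd m2 \<Longrightarrow> odd n \<Longrightarrow> rr (m1*m2) n = rr m1 n * rr m2 n"
proof -
  assume a: "odd m1" "odd m2" "odd n"
  have "s4 m1 = 1 \<or> s4 m1 = -1" "s4 m2 = 1 \<or> s4 m2 = -1" "s4 n = 1 \<or> s4 n = -1"
    by (auto simp: s4_def)
  then show ?thesis using a by (auto simp: rr_s4 s4_mult)
qed

lemma rr_sym: "rr m n = rr n m" unfolding rr_def by auto

lemma recip_prime:
  assumes "prime p" "prime q" "p > 2" "q > 2" "p \<noteq> q"
  shows "jac (int p) q * jac (int q) p = rr p q"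
proof -
  have "jac (int p) q * jac (int q) p = (-1::int) ^ ((p - 1) div 2 * ((q - 1) div 2))"
    using Quadratic_Reciprocity[OF assms(1,3,2,4,5)] assms by (simp add: jac_prime mult.commute)
  moreover have "odd p" "odd q" using assms prime_odd_nat by auto
  moreover have "odd ((p - 1) div 2 * ((q - 1) div 2)) \<longleftrightarrow> p mod 4 = 3 \<and> q mod 4 = 3"
    using \<open>odd p\<close> \<open>odd q\<close> by (simp add: even_mult_iff) presburger
  ultimately show ?thesis unfolding rr_def by auto
qed

lemma recip_prime_gen:
  assumes "prime p" "p > 2" "odd n" "coprime p n"
  shows "jac (int p) n * jac (int n) p = rr p n"
  using assms(3,4)
proof (induction n rule: odd_induct)
  case one then show ?case by (simp add: rr_def jac_prime Legendre_def cong_def)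
next
  case (factor q x)
  have "x > 0" using factor by (intro odd_pos)
  have "p \<noteq> q" using factor(5) factor(1) by (metis coprime_mult_right_iff coprime_self not_prime_unit)
  have "coprime p x" using factor(5) by simp
  have "odd p" "odd q" using assms factor prime_odd_nat by auto
  have "jac (int p) (q * x) * jac (int (q * x)) p = (jac (int p) q * jac (int q) p) * (jac (int p) x * jac (int x) p)"
    using \<open>x>0\<close> factor(1) \<open>odd p\<close> by (simp add: jac_mult prime_gt_0_nat jac_mult_top[symmetric])
  also have "\<dots> = rr p q * rr p x"
    using recip_prime[OF assms(1) factor(1) assms(2) factor(2) \<open>p \<noteq> q\<close>] factor(4) \<open>coprime p x\<close> by simp
  also have "\<dots> = rr p (q*x)" using rr_mult[of q x p] rr_sym \<open>odd p\<close> \<open>odd q\<close> factor(3) by metis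
  finally show ?case .
qed

lemma jac_recip:
  assumes "odd m" "odd n" "coprime m n"
  shows "jac (int m) n * jac (int n) m = rr m n"
  using assms(1,3)
proof (induction m rule: odd_induct)
  case one then show ?case by (simp add: rr_def)
next
  case (factor p x)
  have "x > 0" using factor by (intro odd_pos)
  have "coprime p n" "coprime x n" using factor(5) by auto
  have "odd p" using factor prime_odd_nat by auto
  have "jac (int (p*x)) n * jac (int n) (p * x) = (jac (int p) n * jac (int n) p) * (jac (int x) n * jac (int n) x)"
    using \<open>x>0\<close> factor(1) assms(2) by (simp add: jac_mult prime_gt_0_nat jac_mult_top)
  also have "\<dots> = rr p n * rr x n"
    using recip_prime_gen[OF factor(1,2) assms(2) \<open>coprime p n\<close>] factor(4) \<open>coprime x n\<close> by simp
  also have "\<dots> = rr (p*x) n" using rr_mult \<open>odd p\<close> factor(3) assms(2) by metis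
  finally show ?case .
qed


definition s4i :: "int \<Rightarrow> int" where "s4i n = (if n mod 4 = 1 then 1 else -1)"
definition s8i :: "int \<Rightarrow> int" where "s8i n = (if n mod 8 = 1 \<or> n mod 8 = 7 then 1 else -1)"

lemma s4_abs: "odd n \<Longrightarrow> s4 (nat \<bar>n\<bar>) = (if n > 0 then s4i n else - s4i n)"
proof -
  assume o: "odd n"
  have "int (nat \<bar>n\<bar> mod 4) = \<bar>n\<bar> mod 4" by (simp add: zmod_int)
  then have e: "nat \<bar>n\<bar> mod 4 = 1 \<longleftrightarrow> \<bar>n\<bar> mod 4 = 1" by linarith
  show ?thesis unfolding s4_def s4i_def e using o by (cases "n > 0") (auto, presburger+)
qed

lemma s8_abs: "odd n \<Longrightarrow> s8 (nat \<bar>n\<bar>) = s8i n"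
proof -
  assume o: "odd n"
  have "int (nat \<bar>n\<bar> mod 8) = \<bar>n\<bar> mod 8" by (simp add: zmod_int)
  then have e: "nat \<bar>n\<bar> mod 8 = 1 \<longleftrightarrow> \<bar>n\<bar> mod 8 = 1" "nat \<bar>n\<bar> mod 8 = 7 \<longleftrightarrow> \<bar>n\<bar> mod 8 = 7" by linarith+
  show ?thesis unfolding s8_def s8i_def e using o by (cases "n > 0") (auto, presburger+)
qed

lemma rr_abs: "odd n \<Longrightarrow> rr B (nat \<bar>n\<bar>) = (if B mod 4 = 3 \<and> \<bar>n\<bar> mod 4 = 3 then -1 else 1)"
proof -
  assume o: "odd n"
  have "int (nat \<bar>n\<bar> mod 4) = \<bar>n\<bar> mod 4" by (simp add: zmod_int)
  then have e: "nat \<bar>n\<bar> mod 4 = 3 \<longleftrightarrow> \<bar>n\<bar> mod 4 = 3" by linarith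
  show ?thesis unfolding rr_def e by simp
qed

lemma jac_pow2:
  assumes "odd m" shows "jac (2^e * b) m = jac 2 m ^ e * jac b m"
  by (induction e) (simp_all add: jac_mult_top[OF assms] mult.assoc)

lemma two_pow_decomp:
  fixes A :: int assumes "A \<noteq> 0" shows "\<exists>e B. A = 2^e * B \<and> odd B"
  using assms
proof (induction "nat \<bar>A\<bar>" arbitrary: A rule: less_induct)
  case less
  show ?case
  proof (cases "odd A")
    case True then show ?thesis by (intro exI[of _ 0] exI[of _ A]) auto
  next
    case False
    then obtain A' where A': "A = 2 * A'" by auto
    with less.prems have "A' \<noteq> 0" "nat \<bar>A'\<bar> < nat \<bar>A\<bar>" by auto
    from less.hyps[OF this(2) this(1)] obtain e B where "A' = 2^e * B" "odd B" by blast
    then show ?thesis using A' by (intro exI[of _ "Suc e"] exI[of _ B]) auto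
  qed
qed

definition Psi :: "int \<Rightarrow> int \<Rightarrow> int" where
  "Psi Bs n = (if Bs < 0 then s4i n else 1) * (if \<bar>Bs\<bar> mod 4 = 3 \<and> n mod 4 = 3 then -1 else 1)"

lemma kron_formula:
  fixes A Bs n :: int
  assumes A: "A = 2^e * Bs" and oB: "odd Bs" and on: "odd n" and cp: "coprime A n"
  shows "kronecker A n = Psi Bs n * s8i n ^ e * jac n (nat \<bar>Bs\<bar>)"
proof -
  define m where "m = nat \<bar>n\<bar>"
  define B where "B = nat \<bar>Bs\<bar>"
  have om: "odd m" using on by (simp add: m_def even_nat_iff)
  have oBn: "odd B" using oB by (simp add: B_def even_nat_iff)
  have Bs0: "Bs \<noteq> 0" using oB by auto
  have cpB: "coprime Bs n" using cp A by simp
  have cpBm: "coprime B m" unfolding B_def m_def using cpB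
    by (metis coprime_abs_left_iff coprime_abs_right_iff coprime_int_iff int_nat_eq abs_ge_zero)
  have A_sign: "A \<le> 0 \<longleftrightarrow> Bs < 0" using A Bs0
    by (simp add: mult_le_0_iff) (metis Bs0 le_less)
  have k: "kronecker A n = sgk A n * jac A m" using kron_odd[OF on] m_def by simp
  have j1: "jac A m = s8i n ^ e * jac Bs m"
    using jac_pow2[OF om] jac_2[OF om] s8_abs[OF on] A m_def by simp
  have j2: "jac Bs m = (if Bs < 0 then s4 m else 1) * jac (int B) m"
  proof (cases "Bs < 0")
    case True
    then have "Bs = (-1) * int B" by (simp add: B_def)
    then show ?thesis using True jac_mult_top[OF om, of "-1" "int B"] jac_neg1[OF om] by simp
  next
    case False then show ?thesis by (simp add: B_def)
  qed
  have ju: "jac (int m) B = 1 \<or> jac (int m) B = -1"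
    using jac_unit[OF oBn] cpBm by (simp add: coprime_commute)
  have j3: "jac (int B) m = rr B m * jac (int m) B"
    using jac_recip[OF oBn om cpBm] ju by (auto simp: algebra_simps)
  have j4: "jac (int m) B = (if n < 0 then s4 B else 1) * jac n B"
  proof (cases "n < 0")
    case True
    then have "int m = (-1) * n" by (simp add: m_def)
    then show ?thesis using True jac_mult_top[OF oBn, of "-1" n] jac_neg1[OF oBn] by simp
  next
    case False then show ?thesis by (simp add: m_def)
  qed
  have s4B: "s4 B = (if \<bar>Bs\<bar> mod 4 = 1 then 1 else -1)"
  proof -
    have "int (B mod 4) = \<bar>Bs\<bar> mod 4" by (simp add: B_def zmod_int)
    then show ?thesis unfolding s4_def by auto
  qed
  have rrB: "rr B m = (if \<bar>Bs\<bar> mod 4 = 3 \<and> \<bar>n\<bar> mod 4 = 3 then -1 else 1)"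
  proof -
    have "int (B mod 4) = \<bar>Bs\<bar> mod 4" by (simp add: B_def zmod_int)
    then have "B mod 4 = 3 \<longleftrightarrow> \<bar>Bs\<bar> mod 4 = 3" by linarith
    then show ?thesis using rr_abs[OF on, of B] m_def by simp
  qed
  have main: "sgk A n * (if Bs < 0 then s4 m else 1) * rr B m * (if n < 0 then s4 B else 1) = Psi Bs n"
  proof -
    have oBa: "\<bar>Bs\<bar> mod 4 = 1 \<or> \<bar>Bs\<bar> mod 4 = 3" using oB by presburger
    have onm: "n mod 4 = 1 \<or> n mod 4 = 3" using on by presburger
    have n0: "n \<noteq> 0" using on by auto
    have e1: "sgk A n = (if n < 0 \<and> Bs < 0 then -1 else 1)" using A_sign by (simp add: sgk_def)
    have e2: "s4 m = (if n < 0 then - s4i n else s4i n)" using s4_abs[OF on] n0 m_def by auto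
    have e3: "\<bar>n\<bar> mod 4 = 3 \<longleftrightarrow> (if n < 0 then n mod 4 = 1 else n mod 4 = 3)"
    proof (cases "n < 0")
      case True then have "\<bar>n\<bar> = - n" by simp
      then show ?thesis using True onm by presburger
    next
      case False then show ?thesis by simp
    qed
    have e4: "s4i n = (if n mod 4 = 3 then -1 else 1)" using onm by (auto simp: s4i_def)
    have e5: "s4 B = (if \<bar>Bs\<bar> mod 4 = 3 then -1 else 1)" using s4B oBa by auto
    have e6: "n mod 4 = 1 \<longleftrightarrow> \<not> n mod 4 = 3" using onm by auto
    show ?thesis unfolding Psi_def e1 e2 e4 e5 rrB e3 e6
      by (cases "n<0"; cases "Bs<0"; cases "\<bar>Bs\<bar> mod 4 = 3"; cases "n mod 4 = 3") simp_all
  qed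
  show ?thesis using k j1 j2 j3 j4 main[symmetric] B_def by (simp add: algebra_simps)
qed

lemma kron_period:
  fixes A n k :: int
  assumes "4 dvd A" "odd n" "coprime A n"
  shows "kronecker A (n + k*A) = kronecker A n"
proof (cases "A = 0")
  case True then show ?thesis by simp
next
  case False
  obtain e Bs where A: "A = 2^e * Bs" and oB: "odd Bs" using two_pow_decomp[OF False] by blast
  have e2: "e \<ge> 2"
  proof (rule ccontr)
    assume "\<not> e \<ge> 2"
    then have "e = 0 \<or> e = 1" by auto
    then show False
    proof
      assume "e = 0"
      then have "A = Bs" using A by simp
      then show False using assms(1) oB by (metis dvd_trans even_numeral)
    next
      assume "e = 1"
      then have "A = 2 * Bs" using A by simp
      then have "2 * 2 dvd 2 * Bs" using assms(1) by simp
      then have "2 dvd Bs" using dvd_times_left_cancel_iff[of "2::int" 2 Bs] by simp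
      then show False using oB by simp
    qed
  qed
  define n' where "n' = n + k*A"
  have on': "odd n'" using assms(1,2) unfolding n'_def by auto
  have cp': "coprime A n'" using assms(3) unfolding n'_def
    by (simp add: coprime_iff_gcd_eq_1 gcd_add_mult[of A k n, simplified add.commute] add.commute)
  have m4: "n' mod 4 = n mod 4"
  proof -
    obtain q where "k*A = 4*q" using assms(1) by (auto simp: dvd_def)
    then show ?thesis unfolding n'_def by simp
  qed
  have P: "Psi Bs n' = Psi Bs n" unfolding Psi_def s4i_def m4 by (rule refl)
  have S: "s8i n' ^ e = s8i n ^ e"
  proof (cases "e = 2")
    case True then show ?thesis by (simp add: s8i_def)
  next
    case False
    then have "e \<ge> 3" using e2 by auto
    then have "(2::int)^e = 2^3 * 2^(e-3)" by (metis le_add_diff_inverse power_add)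
    then have "8 dvd A" using A by simp
    then obtain q where "k*A = 8*q" by (auto simp: dvd_def)
    then have "n' mod 8 = n mod 8" unfolding n'_def by simp
    then show ?thesis by (simp add: s8i_def)
  qed
  have J: "jac n' (nat \<bar>Bs\<bar>) = jac n (nat \<bar>Bs\<bar>)"
  proof (rule jac_cong)
    show "odd (nat \<bar>Bs\<bar>)" using oB by (simp add: even_nat_iff)
    have "int (nat \<bar>Bs\<bar>) dvd A" using A by simp
    then show "[n' = n] (mod int (nat \<bar>Bs\<bar>))" unfolding n'_def
      by (simp add: cong_iff_dvd_diff)
  qed
  have "kronecker A n' = Psi Bs n' * s8i n' ^ e * jac n' (nat \<bar>Bs\<bar>)" by (rule kron_formula[OF A oB on' cp'])
  also have "\<dots> = Psi Bs n * s8i n ^ e * jac n (nat \<bar>Bs\<bar>)" by (simp only: P S J)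
  also have "\<dots> = kronecker A n" by (rule kron_formula[OF A oB assms(2,3), symmetric])
  finally show ?thesis unfolding n'_def .
qed


definition xsig :: "int \<Rightarrow> int \<Rightarrow> bool" where
  "xsig c d \<longleftrightarrow> c > 0 \<or> (c = 0 \<and> d > 0)"

definition qd :: "int \<Rightarrow> int \<Rightarrow> nat" where
  "qd c d = (if c \<ge> 0 \<and> d > 0 then 0 else if c > 0 \<and> d \<le> 0 then 1 else if c \<le> 0 \<and> d < 0 then 2 else 3)"

lemma qd_lt: "qd c d < 4" by (simp add: qd_def)
lemma qd0: "qd c d = 0 \<Longrightarrow> c \<ge> 0 \<and> d > 0" by (simp add: qd_def split: if_splits)
lemma qd1: "qd c d = 1 \<Longrightarrow> c > 0 \<and> d \<le> 0" by (simp add: qd_def split: if_splits)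
lemma qd2: "qd c d = 2 \<Longrightarrow> c \<le> 0 \<and> d < 0" by (simp add: qd_def split: if_splits)
lemma qd3: "(c,d) \<noteq> (0,0) \<Longrightarrow> qd c d = 3 \<Longrightarrow> c < 0 \<and> d \<ge> 0" by (auto simp: qd_def split: if_splits)

lemma xsig_qd: "(c,d) \<noteq> (0,0) \<Longrightarrow> xsig c d \<longleftrightarrow> qd c d = 0 \<or> qd c d = 1"
  by (auto simp: qd_def xsig_def)
lemma xsig_rot_qd: "(c,d) \<noteq> (0,0) \<Longrightarrow> xsig d (-c) \<longleftrightarrow> qd c d = 0 \<or> qd c d = 3"
  by (auto simp: qd_def xsig_def)

lemma quad_cw:
  fixes c d u v :: int
  assumes "(c,d) \<noteq> (0,0)" "(u,v) \<noteq> (0,0)" "qd u v = (qd c d + 3) mod 4"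
  shows "u*d - v*c < 0"
proof -
  have "qd c d = 0 \<or> qd c d = 1 \<or> qd c d = 2 \<or> qd c d = 3" using qd_lt[of c d] by linarith
  then show ?thesis
  proof (elim disjE)
    assume h: "qd c d = 0"
    then have "c \<ge> 0" "d > 0" using qd0 by auto
    moreover have hq: "qd u v = 3" using h assms(3) by simp
    moreover have "u < 0" "v \<ge> 0" using qd3[OF assms(2) hq] by auto
    ultimately show ?thesis using mult_neg_pos[of u d] mult_nonneg_nonneg[of v c] by linarith
  next
    assume h: "qd c d = 1"
    then have "c > 0" "d \<le> 0" using qd1 by auto
    moreover have hq: "qd u v = 0" using h assms(3) by simp
    moreover have "u \<ge> 0" "v > 0" using qd0[OF hq] by auto
    ultimately show ?thesis using mult_nonneg_nonpos[of u d] mult_pos_pos[of v c] by linarith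
  next
    assume h: "qd c d = 2"
    then have "c \<le> 0" "d < 0" using qd2 by auto
    moreover have hq: "qd u v = 1" using h assms(3) by simp
    moreover have "u > 0" "v \<le> 0" using qd1[OF hq] by auto
    ultimately show ?thesis using mult_pos_neg[of u d] mult_nonpos_nonpos[of v c] by linarith
  next
    assume h: "qd c d = 3"
    then have "c < 0" "d \<ge> 0" using qd3[OF assms(1)] by auto
    moreover have hq: "qd u v = 2" using h assms(3) by simp
    moreover have "u \<le> 0" "v < 0" using qd2[OF hq] by auto
    ultimately show ?thesis using mult_nonpos_nonneg[of u d] mult_neg_neg[of v c] by linarith
  qed
qed

lemma quad_ccw:
  fixes c d u v :: int
  assumes "(c,d) \<noteq> (0,0)" "(u,v) \<noteq> (0,0)" "qd u v = (qd c d + 1) mod 4"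
  shows "u*d - v*c > 0"
proof -
  have "qd c d = 0 \<or> qd c d = 1 \<or> qd c d = 2 \<or> qd c d = 3" using qd_lt[of c d] by linarith
  then show ?thesis
  proof (elim disjE)
    assume h: "qd c d = 0"
    then have "c \<ge> 0" "d > 0" using qd0 by auto
    moreover have hq: "qd u v = 1" using h assms(3) by simp
    moreover have "u > 0" "v \<le> 0" using qd1[OF hq] by auto
    ultimately show ?thesis using mult_pos_pos[of u d] mult_nonpos_nonneg[of v c] by linarith
  next
    assume h: "qd c d = 1"
    then have "c > 0" "d \<le> 0" using qd1 by auto
    moreover have hq: "qd u v = 2" using h assms(3) by simp
    moreover have "u \<le> 0" "v < 0" using qd2[OF hq] by auto
    ultimately show ?thesis using mult_nonpos_nonpos[of u d] mult_neg_pos[of v c] by linarith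
  next
    assume h: "qd c d = 2"
    then have "c \<le> 0" "d < 0" using qd2 by auto
    moreover have hq: "qd u v = 3" using h assms(3) by simp
    moreover have "u < 0" "v \<ge> 0" using qd3[OF assms(2) hq] by auto
    ultimately show ?thesis using mult_neg_neg[of u d] mult_nonneg_nonpos[of v c] by linarith
  next
    assume h: "qd c d = 3"
    then have "c < 0" "d \<ge> 0" using qd3[OF assms(1)] by auto
    moreover have hq: "qd u v = 0" using h assms(3) by simp
    moreover have "u \<ge> 0" "v > 0" using qd0[OF hq] by auto
    ultimately show ?thesis using mult_nonneg_nonneg[of u d] mult_pos_neg[of v c] by linarith
  qed
qed

lemma hil_def': "hilbert_R x y = (if x < 0 \<and> y < 0 then -1 else 1)" by (simp add: hilbert_R_def)

lemma m2mult_assoc: "m2mult (m2mult x y) z = m2mult x (m2mult y z)"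
  by (cases x; cases y; cases z) (simp add: algebra_simps)

lemma xfun_pos: "xfun (a,b,c,d) > 0 \<longleftrightarrow> xsig c d" by (auto simp: xsig_def)
lemma xfun_neg: "(c,d) \<noteq> (0,0) \<Longrightarrow> xfun (a,b,c,d) < 0 \<longleftrightarrow> \<not> xsig c d" by (auto simp: xsig_def)

lemma cocycle_sig:
  assumes "g1 = (a1,b1,c1,d1)" "g2 = (a2,b2,c2,d2)" "m2mult g1 g2 = (a3,b3,c3,d3)"
    "(c1,d1) \<noteq> (0,0)" "(c2,d2) \<noteq> (0,0)" "(c3,d3) \<noteq> (0,0)"
  shows "cocycle g1 g2 = (if (xsig c1 d1 \<and> xsig c2 d2 \<and> \<not> xsig c3 d3) \<or>
                            (\<not> xsig c1 d1 \<and> \<not> xsig c2 d2 \<and> xsig c3 d3) then -1 else 1)"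
proof -
  define X1 where "X1 = xfun g1"
  define X2 where "X2 = xfun g2"
  define X3 where "X3 = xfun (m2mult g1 g2)"
  have p1: "X1 > 0 \<longleftrightarrow> xsig c1 d1" "X1 < 0 \<longleftrightarrow> \<not> xsig c1 d1"
    unfolding X1_def assms(1) using xfun_pos xfun_neg assms(4) by blast+
  have p2: "X2 > 0 \<longleftrightarrow> xsig c2 d2" "X2 < 0 \<longleftrightarrow> \<not> xsig c2 d2"
    unfolding X2_def assms(2) using xfun_pos xfun_neg assms(5) by blast+
  have p3: "X3 > 0 \<longleftrightarrow> xsig c3 d3" "X3 < 0 \<longleftrightarrow> \<not> xsig c3 d3"
    unfolding X3_def assms(3) using xfun_pos xfun_neg assms(6) by blast+
  have "cocycle g1 g2 = hilbert_R X1 X2 * hilbert_R (- (X1 * X2)) X3"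
    by (simp add: cocycle_def X1_def X2_def X3_def)
  also have "\<dots> = (if (X1 > 0 \<and> X2 > 0 \<and> X3 < 0) \<or> (X1 < 0 \<and> X2 < 0 \<and> X3 > 0) then -1 else 1)"
    using p1 p2 p3 by (auto simp: hil_def' mult_less_0_iff zero_less_mult_iff)
  finally show ?thesis using p1 p2 p3 by simp
qed

lemma cocycle_omega_assoc:
  fixes p q r s a b c d :: int
  assumes "a*d - b*c = 1" "p*s - q*r = 1"
  shows "cocycle (p,q,r,s) (a,b,c,d) * cocycle (m2mult (p,q,r,s) (a,b,c,d)) omega =
         cocycle (p,q,r,s) (m2mult (a,b,c,d) omega) * cocycle (a,b,c,d) omega"
proof -
  define u where "u = r*a + s*c"
  define v where "v = r*b + s*d"
  have r: "r = u*d - v*c"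
  proof -
    have "u*d - v*c = r*(a*d - b*c)" unfolding u_def v_def by (simp add: algebra_simps)
    then show ?thesis using assms(1) by simp
  qed
  have s: "s = v*a - u*b"
  proof -
    have "v*a - u*b = s*(a*d - b*c)" unfolding u_def v_def by (simp add: algebra_simps)
    then show ?thesis using assms(1) by simp
  qed
  have nz1: "(r,s) \<noteq> (0,0)" using assms(2) by auto
  have nz2: "(c,d) \<noteq> (0,0)" using assms(1) by auto
  have nz3: "(u,v) \<noteq> (0,0)" using r s nz1 by auto
  have nz4: "(d,-c) \<noteq> (0,0)" "(v,-u) \<noteq> (0,0)" "(1::int,0::int) \<noteq> (0,0)" using nz2 nz3 by auto
  have om: "omega = (0,-1,1,0)" by (simp add: omega_def)
  have xy: "m2mult (p,q,r,s) (a,b,c,d) = (p*a+q*c, p*b+q*d, u, v)" by (simp add: u_def v_def)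
  have yw: "m2mult (a,b,c,d) omega = (b, -a, d, -c)" by (simp add: omega_def)
  have xyw: "m2mult (p*a+q*c, p*b+q*d, u, v) omega = (p*b+q*d, -(p*a+q*c), v, -u)" by (simp add: omega_def)
  have xw: "m2mult (p,q,r,s) (b, -a, d, -c) = (p*b+q*d, -(p*a+q*c), v, -u)"
    by (simp add: u_def v_def algebra_simps)
  have C1: "cocycle (p,q,r,s) (a,b,c,d) = (if (xsig r s \<and> xsig c d \<and> \<not> xsig u v) \<or>
                            (\<not> xsig r s \<and> \<not> xsig c d \<and> xsig u v) then -1 else 1)"
    by (rule cocycle_sig[OF refl refl xy nz1 nz2 nz3])
  have C2: "cocycle (p*a+q*c, p*b+q*d, u, v) omega = (if (xsig u v \<and> xsig 1 0 \<and> \<not> xsig v (-u)) \<or>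
                            (\<not> xsig u v \<and> \<not> xsig 1 0 \<and> xsig v (-u)) then -1 else 1)"
    by (rule cocycle_sig[OF refl om xyw nz3 nz4(3) nz4(2)])
  have C3: "cocycle (p,q,r,s) (b, -a, d, -c) = (if (xsig r s \<and> xsig d (-c) \<and> \<not> xsig v (-u)) \<or>
                            (\<not> xsig r s \<and> \<not> xsig d (-c) \<and> xsig v (-u)) then -1 else 1)"
    by (rule cocycle_sig[OF refl refl xw nz1 nz4(1) nz4(2)])
  have C4: "cocycle (a,b,c,d) omega = (if (xsig c d \<and> xsig 1 0 \<and> \<not> xsig d (-c)) \<or>
                            (\<not> xsig c d \<and> \<not> xsig 1 0 \<and> xsig d (-c)) then -1 else 1)"
    by (rule cocycle_sig[OF refl om yw nz2 nz4(3) nz4(1)])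
  have x10: "xsig 1 0" by (simp add: xsig_def)
  have cw: "qd u v = (qd c d + 3) mod 4 \<Longrightarrow> \<not> xsig r s"
    using quad_cw[OF nz2 nz3] r by (auto simp: xsig_def)
  have ccw: "qd u v = (qd c d + 1) mod 4 \<Longrightarrow> xsig r s"
    using quad_ccw[OF nz2 nz3] r by (auto simp: xsig_def)
  have Q1: "qd c d = 0 \<or> qd c d = 1 \<or> qd c d = 2 \<or> qd c d = 3" using qd_lt[of c d] by linarith
  have Q2: "qd u v = 0 \<or> qd u v = 1 \<or> qd u v = 2 \<or> qd u v = 3" using qd_lt[of u v] by linarith
  show ?thesis
    unfolding xy yw xw C1 C2 C3 C4 xsig_qd[OF nz2] xsig_rot_qd[OF nz2] xsig_qd[OF nz3] xsig_rot_qd[OF nz3]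
    using x10 cw ccw Q1 Q2 by (elim disjE; cases "xsig r s") simp_all
qed


lemma TL_even: "even c \<Longrightarrow> theta_lambda (a,b,c,d) = of_int (kronecker (2*c) d) * inverse (eps d)"
  by simp

lemma TL_odd: "odd c \<Longrightarrow> theta_lambda (a,b,c,d) =
   of_int (kronecker (-2*d) c) * inverse (eps c) * cis (-pi/4) * of_int (hilbert_R d c)"
  by (simp add: omega_inv_def)

lemma Gth_parity:
  fixes a b c d :: int
  assumes "a*d - b*c = 1" "even (a*c)" "even (b*d)"
  shows "even c \<Longrightarrow> odd d \<and> odd a" "odd c \<Longrightarrow> even d \<and> even a \<and> odd b"
proof -
  have e: "a*d = 1 + b*c" using assms(1) by linarith
  assume "even c"
  then have "even (b*c)" by simp
  then have "odd (a*d)" unfolding e by simp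
  then show "odd d \<and> odd a" by simp
next
  have e: "b*c = a*d - 1" using assms(1) by linarith
  assume oc: "odd c"
  then have ea: "even a" using assms(2) by simp
  then have "even (a*d)" by simp
  then have "odd (b*c)" unfolding e by simp
  then have "odd b" by simp
  then show "even d \<and> even a \<and> odd b" using assms(3) ea by simp
qed

lemma coprime_cd:
  assumes "a*d - b*c = (1::int)" shows "coprime c d"
proof (rule coprimeI)
  fix k assume "k dvd c" "k dvd d"
  then have "k dvd a*d - b*c" by (simp add: dvd_diff)
  then show "is_unit k" using assms by simp
qed

lemma sgk_hil: "sgk (-2*x) c * hilbert_R x c = (if c < 0 then -1 else 1)"
  by (auto simp: sgk_def hilbert_R_def)

lemma eps_period: "4 dvd m \<Longrightarrow> eps (d + m) = eps d"
  by (auto simp: eps_def dvd_def)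

lemma TL_T:
  fixes a b c d k :: int
  assumes "a*d - b*c = 1" "even (a*c)" "even (b*d)"
  shows "theta_lambda (m2mult (a,b,c,d) (1, 2*k, 0, 1)) = theta_lambda (a,b,c,d)"
proof -
  have m: "m2mult (a,b,c,d) (1, 2*k, 0, 1) = (a, b + 2*k*a, c, d + k*(2*c))" by (simp add: algebra_simps)
  have cp: "coprime c d" using coprime_cd[OF assms(1)] .
  show ?thesis
  proof (cases "even c")
    case True
    have od: "odd d" using Gth_parity[OF assms] True by blast
    have "kronecker (2*c) (d + k*(2*c)) = kronecker (2*c) d"
    proof (rule kron_period)
      show "4 dvd 2*c" using True by auto
      show "odd d" by (rule od)
      show "coprime (2*c) d" using cp od by simp
    qed
    moreover have "eps (d + k*(2*c)) = eps d" using True by (intro eps_period) auto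
    ultimately show ?thesis unfolding m using True by simp
  next
    case False
    define d' where "d' = d + k*(2*c)"
    have j: "jac (-2*d') (nat \<bar>c\<bar>) = jac (-2*d) (nat \<bar>c\<bar>)"
    proof (rule jac_cong)
      show "odd (nat \<bar>c\<bar>)" using False by (simp add: even_nat_iff)
      show "[-2*d' = -2*d] (mod int (nat \<bar>c\<bar>))" unfolding d'_def
        by (simp add: cong_iff_dvd_diff algebra_simps)
    qed
    have k1: "kronecker (-2*d') c * hilbert_R d' c = jac (-2*d') (nat \<bar>c\<bar>) * (sgk (-2*d') c * hilbert_R d' c)"
      by (simp add: kron_odd[OF False] mult_ac)
    have k2: "kronecker (-2*d) c * hilbert_R d c = jac (-2*d) (nat \<bar>c\<bar>) * (sgk (-2*d) c * hilbert_R d c)"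
      by (simp add: kron_odd[OF False] mult_ac)
    have kk: "kronecker (-2*d') c * hilbert_R d' c = kronecker (-2*d) c * hilbert_R d c"
      unfolding k1 k2 j sgk_hil ..
    have t1: "theta_lambda (a, b + 2*k*a, c, d') = of_int (kronecker (-2*d') c) * inverse (eps c) * cis (-pi/4) * of_int (hilbert_R d' c)"
      by (rule TL_odd[OF False])
    have t2: "theta_lambda (a, b, c, d) = of_int (kronecker (-2*d) c) * inverse (eps c) * cis (-pi/4) * of_int (hilbert_R d c)"
      by (rule TL_odd[OF False])
    have "theta_lambda (a, b + 2*k*a, c, d') = of_int (kronecker (-2*d') c * hilbert_R d' c) * (inverse (eps c) * cis (-pi/4))"
      unfolding t1 by (simp only: of_int_mult mult_ac)
    also have "\<dots> = theta_lambda (a, b, c, d)"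
      unfolding t2 kk by (simp only: of_int_mult mult_ac)
    finally show ?thesis unfolding m d'_def .
  qed
qed

lemma cis_sq: "cis (-pi/4) * cis (-pi/4) = - \<i>"
proof -
  have "cis (-pi/4) * cis (-pi/4) = cis (-pi/2)" by (simp add: cis_mult)
  also have "\<dots> = - \<i>" by (simp add: complex_eq_iff)
  finally show ?thesis .
qed

lemma W_sign_identity:
  fixes c d :: int
  assumes "odd c"
  shows "of_int (sgk (2*d) (-c)) * inverse (eps (-c)) * of_int (hilbert_R (-c) (if d = 0 then -c else d)) =
         of_int (sgk (-2*d) c * (if c > 0 then s4i c else - s4i c)) * inverse (eps c) * (cis(-pi/4) * cis(-pi/4)) * (of_int (hilbert_R d c) :: complex)"
proof -
  have m: "(-c) mod 4 = 1 \<longleftrightarrow> c mod 4 = 3" "c mod 4 = 1 \<longleftrightarrow> \<not> c mod 4 = 3" using assms by presburger+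
  have c0: "c \<noteq> 0" using assms by auto
  show ?thesis unfolding cis_sq eps_def s4i_def sgk_def hil_def' m
    using c0 by (cases "c > 0"; cases "c mod 4 = 3"; cases "d > 0"; cases "d = 0") auto
qed

lemma TL_W:
  fixes a b c d :: int
  assumes "a*d - b*c = 1" "even (a*c)" "even (b*d)"
  shows "theta_lambda (m2mult (a,b,c,d) omega) * of_int (cocycle (a,b,c,d) omega) = theta_lambda (a,b,c,d) * cis (-pi/4)"
proof -
  have m: "m2mult (a,b,c,d) omega = (b, -a, d, -c)" by (simp add: omega_def)
  have coc: "cocycle (a,b,c,d) omega = hilbert_R (- xfun (a,b,c,d)) (xfun (b,-a,d,-c))"
    unfolding cocycle_def m by (simp add: omega_def hil_def')
  show ?thesis
  proof (cases "even c")
    case True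
    have od: "odd d" using Gth_parity[OF assms] True by blast
    then have d0: "d \<noteq> 0" by auto
    have t1: "theta_lambda (b, -a, d, -c) = of_int (kronecker (-2*(-c)) d) * inverse (eps d) * cis (-pi/4) * of_int (hilbert_R (-c) d)"
      by (rule TL_odd[OF od])
    have t2: "theta_lambda (a,b,c,d) = of_int (kronecker (2*c) d) * inverse (eps d)" by (rule TL_even[OF True])
    have h: "hilbert_R (-c) d * hilbert_R (- xfun (a,b,c,d)) (xfun (b,-a,d,-c)) = 1"
      using d0 by (cases "c = 0") (auto simp: hil_def')
    have "theta_lambda (m2mult (a,b,c,d) omega) * of_int (cocycle (a,b,c,d) omega) =
          of_int (kronecker (2*c) d) * inverse (eps d) * cis (-pi/4) * of_int (hilbert_R (-c) d * hilbert_R (- xfun (a,b,c,d)) (xfun (b,-a,d,-c)))"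
      unfolding m t1 coc by (simp add: mult_ac)
    also have "\<dots> = theta_lambda (a,b,c,d) * cis (-pi/4)" unfolding h t2 by simp
    finally show ?thesis .
  next
    case False
    have ed: "even d" using Gth_parity[OF assms] False by blast
    have ocn: "odd (-c)" using False by simp
    have t1: "theta_lambda (b, -a, d, -c) = of_int (kronecker (2*d) (-c)) * inverse (eps (-c))"
      by (rule TL_even[OF ed])
    have t2: "theta_lambda (a,b,c,d) = of_int (kronecker (-2*d) c) * inverse (eps c) * cis (-pi/4) * of_int (hilbert_R d c)"
      by (rule TL_odd[OF False])
    have oc: "odd (nat \<bar>c\<bar>)" using False by (simp add: even_nat_iff)
    define J where "J = jac (2*d) (nat \<bar>c\<bar>)"
    have k1: "kronecker (2*d) (-c) = sgk (2*d) (-c) * J" using kron_odd[OF ocn] J_def by simp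
    have "jac (-2*d) (nat \<bar>c\<bar>) = jac (-1) (nat \<bar>c\<bar>) * J"
      unfolding J_def using jac_mult_top[OF oc, of "-1" "2*d"] by simp
    then have "jac (-2*d) (nat \<bar>c\<bar>) = (if c > 0 then s4i c else - s4i c) * J"
      using jac_neg1[OF oc] s4_abs[OF False] by simp
    then have k2: "kronecker (-2*d) c = sgk (-2*d) c * (if c > 0 then s4i c else - s4i c) * J"
      using kron_odd[OF False] by simp
    have xf: "xfun (a,b,c,d) = c" "xfun (b,-a,d,-c) = (if d = 0 then -c else d)" using False by auto
    have "theta_lambda (m2mult (a,b,c,d) omega) * of_int (cocycle (a,b,c,d) omega) =
       of_int J * (of_int (sgk (2*d) (-c)) * inverse (eps (-c)) * of_int (hilbert_R (-c) (if d = 0 then -c else d)))"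
      unfolding m t1 coc xf k1 by (simp add: mult_ac)
    also have "\<dots> = of_int J * (of_int (sgk (-2*d) c * (if c > 0 then s4i c else - s4i c)) * inverse (eps c) * (cis(-pi/4) * cis(-pi/4)) * (of_int (hilbert_R d c)))"
      unfolding W_sign_identity[OF False] ..
    also have "\<dots> = theta_lambda (a,b,c,d) * cis (-pi/4)"
      unfolding t2 k2 by (simp only: of_int_mult mult_ac)
    finally show ?thesis .
  qed
qed


definition Gth :: "(mat2 \<times> int) set" where
  "Gth = {((a,b,c,d),e). a*d - b*c = 1 \<and> even (a*c) \<and> even (b*d) \<and> (e = 1 \<or> e = -1)}"

fun mu :: "mat2 \<times> int \<Rightarrow> complex" where
  "mu (g, e) = theta_lambda g * of_int e"

lemma cocycle_pm: "cocycle g h = 1 \<or> cocycle g h = -1"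
  by (auto simp: cocycle_def hil_def')

lemma cocycle_sq: "cocycle g h * cocycle g h = 1"
  using cocycle_pm[of g h] by auto

lemma Gth_class:
  fixes a b c d :: int
  assumes "a*d - b*c = 1" "even (a*c)" "even (b*d)"
  shows "(even c \<and> odd a \<and> even b \<and> odd d) \<or> (odd c \<and> even a \<and> odd b \<and> even d)"
proof (cases "even c")
  case True
  then have "odd d \<and> odd a" using Gth_parity(1)[OF assms] by blast
  moreover then have "even b" using assms(3) by simp
  ultimately show ?thesis using True by blast
next
  case False
  then show ?thesis using Gth_parity(2)[OF assms] by blast
qed

lemma Gth_iff_class:
  fixes a b c d :: int
  assumes "a*d - b*c = 1"
  shows "even (a*c) \<and> even (b*d) \<longleftrightarrow> (even c \<and> odd a \<and> even b \<and> odd d) \<or> (odd c \<and> even a \<and> odd b \<and> even d)"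
  using Gth_class[OF assms] by auto

lemma det_mult:
  fixes p q r s a b c d :: int
  shows "m2mult (p,q,r,s) (a,b,c,d) = (p*a+q*c, p*b+q*d, r*a+s*c, r*b+s*d)"
    "(p*a+q*c)*(r*b+s*d) - (p*b+q*d)*(r*a+s*c) = (p*s - q*r) * (a*d - b*c)"
  by (simp_all add: algebra_simps)

lemma Gth_closed:
  assumes "x \<in> Gth" "y \<in> Gth" shows "mp_mult x y \<in> Gth"
proof -
  obtain p q r s e1 a b c d e2 where x: "x = ((p,q,r,s),e1)" and y: "y = ((a,b,c,d),e2)"
    by (metis prod.collapse)
  have hx: "p*s - q*r = 1" "even (p*r)" "even (q*s)" "e1 = 1 \<or> e1 = -1" using assms(1) x by (auto simp: Gth_def)
  have hy: "a*d - b*c = 1" "even (a*c)" "even (b*d)" "e2 = 1 \<or> e2 = -1" using assms(2) y by (auto simp: Gth_def)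
  have det: "(p*a+q*c)*(r*b+s*d) - (p*b+q*d)*(r*a+s*c) = 1" using det_mult(2) hx(1) hy(1) by simp
  have cx: "(even r \<and> odd p \<and> even q \<and> odd s) \<or> (odd r \<and> even p \<and> odd q \<and> even s)" using Gth_class[OF hx(1-3)] .
  have cy: "(even c \<and> odd a \<and> even b \<and> odd d) \<or> (odd c \<and> even a \<and> odd b \<and> even d)" using Gth_class[OF hy(1-3)] .
  have par: "even ((p*a+q*c)*(r*a+s*c)) \<and> even ((p*b+q*d)*(r*b+s*d))"
    using cx cy by auto
  have sg: "cocycle (p,q,r,s) (a,b,c,d) * e1 * e2 = 1 \<or> cocycle (p,q,r,s) (a,b,c,d) * e1 * e2 = -1"
    using cocycle_pm[of "(p,q,r,s)" "(a,b,c,d)"] hx(4) hy(4) by auto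
  show ?thesis unfolding x y using det par sg by (simp add: Gth_def)
qed

definition Tk :: "int \<Rightarrow> mat2" where "Tk k = (1, 2*k, 0, 1)"

lemma cocycle_T: "cocycle g (Tk k) = 1"
proof -
  obtain a b c d where g: "g = (a,b,c,d)" by (metis prod.collapse)
  show ?thesis unfolding g Tk_def cocycle_def by (auto simp: hil_def' algebra_simps)
qed

lemma xfun_T: "xfun (m2mult g (Tk k)) = xfun g"
proof -
  obtain a b c d where g: "g = (a,b,c,d)" by (metis prod.collapse)
  show ?thesis unfolding g Tk_def by (auto simp: algebra_simps)
qed

lemma assoc_T: "mp_mult (mp_mult x y) (Tk k, 1) = mp_mult x (mp_mult y (Tk k, 1))"
proof -
  obtain g1 e1 g2 e2 where x: "x = (g1,e1)" and y: "y = (g2,e2)" by (metis prod.collapse)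
  have "cocycle g1 (m2mult g2 (Tk k)) = cocycle g1 g2"
    unfolding cocycle_def xfun_T m2mult_assoc[symmetric] by simp
  then show ?thesis unfolding x y by (simp add: cocycle_T m2mult_assoc)
qed

lemma assoc_W:
  assumes "fst x \<in> {(a,b,c,d). a*d - b*c = 1}" "fst y \<in> {(a,b,c,d). a*d - b*c = 1}"
  shows "mp_mult (mp_mult x y) (omega, 1) = mp_mult x (mp_mult y (omega, 1))"
proof -
  obtain p q r s e1 a b c d e2 where x: "x = ((p,q,r,s),e1)" and y: "y = ((a,b,c,d),e2)"
    by (metis prod.collapse)
  have h: "a*d - b*c = 1" "p*s - q*r = 1" using assms x y by auto
  have "cocycle (m2mult (p,q,r,s) (a,b,c,d)) omega * (cocycle (p,q,r,s) (a,b,c,d) * e1 * e2) =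
        cocycle (p,q,r,s) (m2mult (a,b,c,d) omega) * e1 * (cocycle (a,b,c,d) omega * e2)"
    using cocycle_omega_assoc[OF h] by (simp add: mult_ac)
  then show ?thesis unfolding x y by (simp only: mp_mult.simps m2mult_assoc) simp
qed

lemma mu_T:
  assumes "x \<in> Gth" shows "mu (mp_mult x (Tk k, 1)) = mu x"
proof -
  obtain a b c d e where x: "x = ((a,b,c,d),e)" by (metis prod.collapse)
  have h: "a*d - b*c = 1" "even (a*c)" "even (b*d)" using assms x by (auto simp: Gth_def)
  show ?thesis unfolding x using TL_T[OF h, of k] by (simp add: cocycle_T Tk_def[symmetric])
qed

lemma mu_W:
  assumes "x \<in> Gth" shows "mu (mp_mult x (omega, 1)) = mu x * cis (-pi/4)"
proof -
  obtain a b c d e where x: "x = ((a,b,c,d),e)" by (metis prod.collapse)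
  have h: "a*d - b*c = 1" "even (a*c)" "even (b*d)" using assms x by (auto simp: Gth_def)
  have "mu (mp_mult x (omega, 1)) = theta_lambda (m2mult (a,b,c,d) omega) * of_int (cocycle (a,b,c,d) omega) * of_int e"
    unfolding x by simp
  also have "\<dots> = theta_lambda (a,b,c,d) * cis (-pi/4) * of_int e" unfolding TL_W[OF h] ..
  finally show ?thesis unfolding x by (simp add: mult_ac)
qed

lemma kron_0_1: "kronecker 0 1 = 1" by (simp add: kronecker_def)

lemma mu_Tgen: "mu (Tk k, 1) = 1"
  by (simp add: Tk_def kron_0_1 eps_def)

lemma mu_Wgen: "mu (omega, 1) = cis (-pi/4)"
  by (simp add: omega_def omega_inv_def kron_0_1 eps_def hil_def')

lemma T_in: "(Tk k, 1) \<in> Gth" by (simp add: Tk_def Gth_def)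
lemma W_in: "(omega, 1) \<in> Gth" by (simp add: omega_def Gth_def)

definition QQ :: "mat2 \<times> int \<Rightarrow> bool" where
  "QQ y \<longleftrightarrow> (\<forall>x\<in>Gth. mu (mp_mult x y) = mu x * mu y)"

lemma Gth_det: "x \<in> Gth \<Longrightarrow> fst x \<in> {(a,b,c,d). a*d - b*c = 1}"
  by (auto simp: Gth_def)

lemma QQ_T: assumes "y \<in> Gth" "QQ y" shows "QQ (mp_mult y (Tk k, 1))"
  unfolding QQ_def
proof
  fix x assume x: "x \<in> Gth"
  have "mu (mp_mult x (mp_mult y (Tk k, 1))) = mu (mp_mult (mp_mult x y) (Tk k, 1))" by (simp add: assoc_T)
  also have "\<dots> = mu (mp_mult x y)" by (rule mu_T[OF Gth_closed[OF x assms(1)]])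
  also have "\<dots> = mu x * mu y" using assms(2) x by (simp add: QQ_def)
  also have "\<dots> = mu x * mu (mp_mult y (Tk k, 1))" by (simp add: mu_T[OF assms(1)])
  finally show "mu (mp_mult x (mp_mult y (Tk k, 1))) = mu x * mu (mp_mult y (Tk k, 1))" .
qed

lemma QQ_W: assumes "y \<in> Gth" "QQ y" shows "QQ (mp_mult y (omega, 1))"
  unfolding QQ_def
proof
  fix x assume x: "x \<in> Gth"
  have "mu (mp_mult x (mp_mult y (omega, 1))) = mu (mp_mult (mp_mult x y) (omega, 1))"
    using assoc_W[OF Gth_det[OF x] Gth_det[OF assms(1)]] by simp
  also have "\<dots> = mu (mp_mult x y) * cis (-pi/4)" by (rule mu_W[OF Gth_closed[OF x assms(1)]])
  also have "\<dots> = mu x * mu y * cis (-pi/4)" using assms(2) x by (simp add: QQ_def)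
  also have "\<dots> = mu x * mu (mp_mult y (omega, 1))" by (simp add: mu_W[OF assms(1)] mult_ac)
  finally show "mu (mp_mult x (mp_mult y (omega, 1))) = mu x * mu (mp_mult y (omega, 1))" .
qed

lemma QQ_base: assumes "e = 1 \<or> e = -1" shows "QQ ((1,0,0,1), e)"
  unfolding QQ_def
proof
  fix x assume "x \<in> Gth"
  obtain a b c d e1 where x: "x = ((a,b,c,d),e1)" by (metis prod.collapse)
  have "cocycle (a,b,c,d) (1,0,0,1) = 1" by (auto simp: cocycle_def hil_def')
  then show "mu (mp_mult x ((1, 0, 0, 1), e)) = mu x * mu ((1, 0, 0, 1), e)"
    unfolding x by (simp add: kron_0_1 eps_def)
qed

lemma decomp:
  assumes "m2mult g' t = g" "e = 1 \<or> e = -1"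
  shows "mp_mult (g', e * cocycle g' t) (t, 1) = (g, e)"
  using assms cocycle_sq[of g' t] by (auto simp: mult_ac)

lemma red_exists_pos:
  fixes c d :: int assumes "c > 0" "odd (c + d)"
  shows "\<exists>k. \<bar>d - 2*k*c\<bar> < \<bar>c\<bar>"
proof -
  define q where "q = (d + c) div (2*c)"
  define r where "r = (d + c) mod (2*c)"
  have e: "d + c = 2*c*q + r" unfolding q_def r_def by simp
  have r0: "0 \<le> r" "r < 2*c" unfolding r_def using assms(1) by simp_all
  have "odd r"
  proof -
    have "r = (d + c) - 2*(c*q)" using e by simp
    then show ?thesis using assms(2) by (simp add: add.commute)
  qed
  then have "r \<noteq> 0" by auto
  then have "\<bar>d - 2*q*c\<bar> < \<bar>c\<bar>" using e r0 assms(1) by (simp add: algebra_simps)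
  then show ?thesis by blast
qed

lemma red_exists:
  fixes c d :: int assumes "c \<noteq> 0" "odd (c + d)"
  shows "\<exists>k. \<bar>d - 2*k*c\<bar> < \<bar>c\<bar>"
proof (cases "c > 0")
  case True then show ?thesis using red_exists_pos assms by blast
next
  case False
  then have "-c > 0" using assms(1) by simp
  moreover have "odd (-c + d)" using assms(2) by (metis add.commute add_uminus_conv_diff even_add even_minus)
  ultimately obtain k where "\<bar>d - 2*k*(-c)\<bar> < \<bar>-c\<bar>" using red_exists_pos by blast
  then have "\<bar>d - 2*(-k)*c\<bar> < \<bar>c\<bar>" by simp
  then show ?thesis by blast
qed

lemma QQ_c0_pos: assumes "((1,b,0,1),e) \<in> Gth" shows "QQ ((1,b,0,1),e)"
proof -
  have eb: "even b" and e: "e = 1 \<or> e = -1" using assms by (auto simp: Gth_def)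
  define k where "k = b div 2"
  have m: "m2mult (1,0,0,1) (Tk k) = (1,b,0,1)" using eb by (simp add: Tk_def k_def)
  have "mp_mult ((1,0,0,1), e * cocycle (1,0,0,1) (Tk k)) (Tk k, 1) = ((1,b,0,1),e)"
    by (rule decomp[OF m e])
  then have y: "mp_mult ((1,0,0,1), e) (Tk k, 1) = ((1,b,0,1),e)" by (simp add: cocycle_T)
  have "((1,0,0,1), e) \<in> Gth" using e by (auto simp: Gth_def)
  from QQ_T[OF this QQ_base[OF e], of k] show ?thesis unfolding y .
qed

lemma QQ_c0: assumes "((a,b,0,d),e) \<in> Gth" shows "QQ ((a,b,0,d),e)"
proof -
  have ad: "a*d = 1" and e: "e = 1 \<or> e = -1" and bd: "even (b*d)" using assms by (auto simp: Gth_def)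
  then have "(a = 1 \<and> d = 1) \<or> (a = -1 \<and> d = -1)" using zmult_eq_1_iff by blast
  then show ?thesis
  proof
    assume "a = 1 \<and> d = 1" then show ?thesis using QQ_c0_pos assms by auto
  next
    assume h: "a = -1 \<and> d = -1"
    then have eb: "even b" using bd by simp
    define y1m :: mat2 where "y1m = (-b, -1, 1, 0)"
    define y2m :: mat2 where "y2m = (1, -b, 0, 1)"
    have m1: "m2mult y1m omega = (a,b,0,d)" using h by (simp add: y1m_def omega_def)
    have m2: "m2mult y2m omega = y1m" by (simp add: y1m_def y2m_def omega_def)
    define e1 where "e1 = e * cocycle y1m omega"
    define e2 where "e2 = e1 * cocycle y2m omega"
    have e1: "e1 = 1 \<or> e1 = -1" using e cocycle_pm[of y1m omega] unfolding e1_def by auto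
    have e2: "e2 = 1 \<or> e2 = -1" using e1 cocycle_pm[of y2m omega] unfolding e2_def by auto
    have d1: "mp_mult (y1m, e1) (omega, 1) = ((a,b,0,d),e)" unfolding e1_def by (rule decomp[OF m1 e])
    have d2: "mp_mult (y2m, e2) (omega, 1) = (y1m, e1)" unfolding e2_def by (rule decomp[OF m2 e1])
    have in2: "(y2m, e2) \<in> Gth" using e2 eb by (simp add: Gth_def y2m_def)
    have in1: "(y1m, e1) \<in> Gth" using e1 eb by (simp add: Gth_def y1m_def)
    have "QQ (y2m, e2)" using QQ_c0_pos in2 unfolding y2m_def by blast
    then have "QQ (y1m, e1)" using QQ_W[OF in2] d2 by metis
    then show ?thesis using QQ_W[OF in1] d1 by metis
  qed
qed

fun cofn :: "mat2 \<times> int \<Rightarrow> nat" where "cofn ((a,b,c,d),e) = nat \<bar>c\<bar>"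

lemma QQ_all_aux: "\<forall>y. y \<in> Gth \<longrightarrow> cofn y = n \<longrightarrow> QQ y"
proof (induction n rule: less_induct)
  case (less n)
  show ?case
  proof (intro allI impI)
    fix y assume yG: "y \<in> Gth" and yn: "cofn y = n"
    obtain a b c d e where y: "y = ((a,b,c,d),e)" by (metis prod.collapse)
    have h: "a*d - b*c = 1" "even (a*c)" "even (b*d)" and e: "e = 1 \<or> e = -1" using yG y by (auto simp: Gth_def)
    show "QQ y"
    proof (cases "c = 0")
      case True then show ?thesis using QQ_c0 yG y by simp
    next
      case False
      have "odd (c + d)" using Gth_class[OF h] by auto
      then obtain k where kk: "\<bar>d - 2*k*c\<bar> < \<bar>c\<bar>" using red_exists[OF False] by blast
      define d1 where "d1 = d - 2*k*c"
      define y1m :: mat2 where "y1m = (a, b - 2*k*a, c, d1)"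
      define y2m :: mat2 where "y2m = (-(b - 2*k*a), a, -d1, c)"
      have m1: "m2mult y1m (Tk k) = (a,b,c,d)" by (simp add: y1m_def Tk_def d1_def algebra_simps)
      have m2: "m2mult y2m omega = y1m" by (simp add: y1m_def y2m_def omega_def)
      define e1 where "e1 = e * cocycle y1m (Tk k)"
      define e2 where "e2 = e1 * cocycle y2m omega"
      have e1: "e1 = 1 \<or> e1 = -1" using e cocycle_pm[of y1m "Tk k"] unfolding e1_def by auto
      have e2: "e2 = 1 \<or> e2 = -1" using e1 cocycle_pm[of y2m omega] unfolding e2_def by auto
      have d1: "mp_mult (y1m, e1) (Tk k, 1) = ((a,b,c,d),e)" unfolding e1_def by (rule decomp[OF m1 e])
      have d2: "mp_mult (y2m, e2) (omega, 1) = (y1m, e1)" unfolding e2_def by (rule decomp[OF m2 e1])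
      have det1: "a*d1 - (b - 2*k*a)*c = 1" using h(1) by (simp add: d1_def algebra_simps)
      have det2: "(-(b - 2*k*a))*c - a*(-d1) = 1" using det1 by (simp add: algebra_simps)
      have par1: "even (a*c)" "even ((b - 2*k*a)*d1)"
        using h(2,3) by (auto simp: d1_def algebra_simps)
      have in1: "(y1m, e1) \<in> Gth" using e1 det1 par1 by (simp add: Gth_def y1m_def)
      have par2: "even ((-(b - 2*k*a)) * (-d1))" "even (a*c)" using par1 by simp_all
      have in2: "(y2m, e2) \<in> Gth" using e2 det2 par2 unfolding Gth_def y2m_def by blast
      have lt: "cofn (y2m, e2) < n" using kk yn y False by (simp add: y2m_def d1_def)
      have "QQ (y2m, e2)" using less.IH[OF lt] in2 by blast
      then have "QQ (y1m, e1)" using QQ_W[OF in2] d2 by metis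
      then show ?thesis using QQ_T[OF in1] d1 y by metis
    qed
  qed
qed

theorem mu_mult:
  assumes "x \<in> Gth" "y \<in> Gth" shows "mu (mp_mult x y) = mu x * mu y"
proof -
  have "QQ y" using QQ_all_aux[of "cofn y"] assms(2) by blast
  then show ?thesis unfolding QQ_def using assms(1) by blast
qed


lemma chi_period:
  assumes "\<forall>n. \<chi> (n + int N) = \<chi> n"
  shows "\<chi> (n + k * int N) = \<chi> n"
proof -
  have pos: "\<chi> (n + int j * int N) = \<chi> n" for n and j :: nat
  proof (induction j arbitrary: n)
    case 0 then show ?case by simp
  next
    case (Suc j)
    have "\<chi> (n + int (Suc j) * int N) = \<chi> ((n + int j * int N) + int N)" by (simp add: algebra_simps)
    also have "\<dots> = \<chi> (n + int j * int N)" using assms by blast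
    finally show ?case using Suc by simp
  qed
  show ?thesis
  proof (cases "k \<ge> 0")
    case True then show ?thesis using pos[of n "nat k"] by simp
  next
    case False
    have "\<chi> ((n + k * int N) + int (nat (-k)) * int N) = \<chi> (n + k * int N)" by (rule pos)
    then show ?thesis using False by simp
  qed
qed

lemma lambda_bar_mu: "lambda_bar \<chi> ((a,b,c,d),e) = mu ((a,b,c,d),e) * \<chi> d"
  by simp

lemma Gamma_theta0_Gth: "x \<in> mp_Gamma_theta0 M \<Longrightarrow> x \<in> Gth"
  by (auto simp: mp_Gamma_theta0_def mp_Gamma0_def Gth_def)

lemma Gamma_theta0_sub: "mp_Gamma_theta0 M \<subseteq> mp_Gamma0 M"
  by (auto simp: mp_Gamma_theta0_def)

lemma Gamma0_closed:
  assumes "x \<in> mp_Gamma0 M" "y \<in> mp_Gamma0 M" shows "mp_mult x y \<in> mp_Gamma0 M"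
proof -
  obtain p q r s e1 a b c d e2 where x: "x = ((p,q,r,s),e1)" and y: "y = ((a,b,c,d),e2)"
    by (metis prod.collapse)
  have hx: "p*s - q*r = 1" "int M dvd r" "e1 = 1 \<or> e1 = -1" using assms(1) x by (auto simp: mp_Gamma0_def)
  have hy: "a*d - b*c = 1" "int M dvd c" "e2 = 1 \<or> e2 = -1" using assms(2) y by (auto simp: mp_Gamma0_def)
  have det: "(p*a+q*c)*(r*b+s*d) - (p*b+q*d)*(r*a+s*c) = 1" using det_mult(2) hx(1) hy(1) by simp
  have dv: "int M dvd r*a+s*c" using hx(2) hy(2) by simp
  have sg: "cocycle (p,q,r,s) (a,b,c,d) * e1 * e2 = 1 \<or> cocycle (p,q,r,s) (a,b,c,d) * e1 * e2 = -1"
    using cocycle_pm[of "(p,q,r,s)" "(a,b,c,d)"] hx(3) hy(3) by auto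
  show ?thesis unfolding x y using det dv sg by (simp add: mp_Gamma0_def)
qed

lemma Gamma_theta0_closed:
  assumes "x \<in> mp_Gamma_theta0 M" "y \<in> mp_Gamma_theta0 M" shows "mp_mult x y \<in> mp_Gamma_theta0 M"
proof -
  have "mp_mult x y \<in> mp_Gamma0 M" using Gamma0_closed assms Gamma_theta0_sub by blast
  moreover have "mp_mult x y \<in> Gth" using Gth_closed Gamma_theta0_Gth assms by blast
  ultimately show ?thesis
    by (cases "mp_mult x y") (auto simp: mp_Gamma_theta0_def Gth_def)
qed

fun clsm :: "mat2 \<Rightarrow> nat" where
  "clsm (a,b,c,d) = (if odd b \<and> odd d then 2 else if odd a \<and> odd c then 3 else 1)"

lemma sl2_patterns:
  fixes a b c d :: int assumes "a*d - b*c = 1"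
  shows "(odd a \<and> even b \<and> even c \<and> odd d) \<or> (even a \<and> odd b \<and> odd c \<and> even d) \<or>
         (odd a \<and> odd b \<and> even c \<and> odd d) \<or> (even a \<and> odd b \<and> odd c \<and> odd d) \<or>
         (odd a \<and> even b \<and> odd c \<and> odd d) \<or> (odd a \<and> odd b \<and> odd c \<and> even d)"
proof -
  have "odd (a*d - b*c)" using assms by simp
  then have "(odd (a*d) \<and> even (b*c)) \<or> (even (a*d) \<and> odd (b*c))" by auto
  then show ?thesis by auto
qed

lemma clsm_1:
  fixes a b c d :: int assumes "a*d - b*c = 1"
  shows "clsm (a,b,c,d) = 1 \<longleftrightarrow> even (a*c) \<and> even (b*d)"
  using sl2_patterns[OF assms] by auto

lemma clsm_mult:
  fixes p q r s a b c d :: int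
  assumes "p*s - q*r = 1" "even (p*r)" "even (q*s)" "a*d - b*c = 1"
  shows "clsm (m2mult (p,q,r,s) (a,b,c,d)) = clsm (a,b,c,d)"
proof -
  have h: "(even r \<and> odd p \<and> even q \<and> odd s) \<or> (odd r \<and> even p \<and> odd q \<and> even s)"
    using Gth_class[OF assms(1-3)] .
  from h sl2_patterns[OF assms(4)] show ?thesis by (elim disjE conjE) simp_all
qed

locale indctx =
  fixes N :: nat and \<chi> :: "int \<Rightarrow> complex"
  assumes N1: "N \<ge> 1" and oddN: "odd N" and dc: "dirichlet_character N \<chi>"
begin

abbreviation "GG \<equiv> mp_Gamma0 (N^2)"
abbreviation "HH \<equiv> mp_Gamma_theta0 (N^2)"
abbreviation "sig \<equiv> (\<lambda>h. inverse (lambda_bar \<chi> h))"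

lemma chi_per: "\<chi> (n + k * int N) = \<chi> n"
  using chi_period[of \<chi> N n k] dc by (auto simp: dirichlet_character_def)

lemma chi_mult: "\<chi> (m * n) = \<chi> m * \<chi> n"
  using dc by (simp add: dirichlet_character_def)

lemma chi_1: "\<chi> 1 = 1"
  using dc by (simp add: dirichlet_character_def)

lemma lambda_mult:
  assumes "x \<in> HH" "y \<in> HH"
  shows "lambda_bar \<chi> (mp_mult x y) = lambda_bar \<chi> x * lambda_bar \<chi> y"
proof -
  obtain p q r s e1 a b c d e2 where x: "x = ((p,q,r,s),e1)" and y: "y = ((a,b,c,d),e2)"
    by (metis prod.collapse)
  have "int (N^2) dvd r" using assms(1) x by (auto simp: mp_Gamma_theta0_def mp_Gamma0_def)
  then obtain t where "r = int N * (int N * t)" by (auto simp: dvd_def power2_eq_square mult.assoc)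
  then have ch: "\<chi> (r*b + s*d) = \<chi> s * \<chi> d"
    using chi_per[of "s*d" "N*t*b"] chi_mult by (simp add: algebra_simps)
  have mm: "mu (mp_mult x y) = mu x * mu y"
    using mu_mult Gamma_theta0_Gth assms by blast
  have "lambda_bar \<chi> (mp_mult x y) = mu (mp_mult x y) * \<chi> (r*b + s*d)"
    unfolding x y by simp
  also have "\<dots> = (mu x * \<chi> s) * (mu y * \<chi> d)" unfolding mm ch by (simp add: mult_ac)
  also have "\<dots> = lambda_bar \<chi> x * lambda_bar \<chi> y" unfolding x y by simp
  finally show ?thesis .
qed

lemma sig_mult: "x \<in> HH \<Longrightarrow> y \<in> HH \<Longrightarrow> sig (mp_mult x y) = sig x * sig y"
  using lambda_mult by simp

lemma HH_iff: "x \<in> HH \<longleftrightarrow> x \<in> GG \<and> clsm (fst x) = 1"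
proof -
  obtain a b c d e where x: "x = ((a,b,c,d),e)" by (metis prod.collapse)
  show ?thesis
  proof
    assume "x \<in> HH" then show "x \<in> GG \<and> clsm (fst x) = 1"
      using x clsm_1 by (auto simp: mp_Gamma_theta0_def mp_Gamma0_def)
  next
    assume "x \<in> GG \<and> clsm (fst x) = 1" then show "x \<in> HH"
      using x clsm_1[of a d b c] by (auto simp: mp_Gamma_theta0_def mp_Gamma0_def)
  qed
qed

lemma clsm_mult_HH:
  assumes "h \<in> HH" "g \<in> GG" shows "clsm (fst (mp_mult h g)) = clsm (fst g)"
proof -
  obtain p q r s e1 a b c d e2 where x: "h = ((p,q,r,s),e1)" and y: "g = ((a,b,c,d),e2)"
    by (metis prod.collapse)
  have "p*s - q*r = 1" "even (p*r)" "even (q*s)" using assms(1) x by (auto simp: mp_Gamma_theta0_def mp_Gamma0_def)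
  moreover have "a*d - b*c = 1" using assms(2) y by (auto simp: mp_Gamma0_def)
  ultimately show ?thesis using clsm_mult x y by simp
qed

definition f0 :: "mat2 \<times> int \<Rightarrow> complex" where
  "f0 x = (if x \<in> HH then sig x else 0)"

lemma f0_in: "f0 \<in> ind_space GG mp_mult HH sig"
  unfolding ind_space_def
proof (intro CollectI conjI allI impI ballI)
  fix x assume "x \<notin> GG" then show "f0 x = 0" using Gamma_theta0_sub f0_def by auto
next
  fix h g assume h: "h \<in> HH" and g: "g \<in> GG"
  show "f0 (mp_mult h g) = sig h * f0 g"
  proof (cases "g \<in> HH")
    case True
    then have "mp_mult h g \<in> HH" using Gamma_theta0_closed h by blast
    then show ?thesis using True sig_mult[OF h True] by (simp add: f0_def)
  next
    case False
    then have "clsm (fst g) \<noteq> 1" using g HH_iff by blast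
    then have "mp_mult h g \<notin> HH" using clsm_mult_HH[OF h g] HH_iff by simp
    then show ?thesis using False by (simp add: f0_def)
  qed
qed

lemma I_HH: "((1,0,0,1),1) \<in> HH" by (simp add: mp_Gamma_theta0_def mp_Gamma0_def)

lemma f0_nonzero: "f0 \<noteq> (\<lambda>_. 0)"
proof
  assume "f0 = (\<lambda>_. 0)"
  then have "f0 ((1,0,0,1),1) = 0" by simp
  moreover have "f0 ((1,0,0,1),1) = 1" using I_HH chi_1 by (simp add: f0_def kron_0_1 eps_def)
  ultimately show False by simp
qed


definition MM :: int where "MM = int N ^ 2"

lemma MM_eq: "int (N^2) = MM" by (simp add: MM_def)
lemma MM_pos: "MM > 0" using N1 by (simp add: MM_def)
lemma MM_odd: "odd MM" using oddN by (simp add: MM_def)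
lemma MM_N: "MM = int N * (int N)" by (simp add: MM_def power2_eq_square)

lemma GG_mem: "((a,b,c,d),e) \<in> GG \<longleftrightarrow> a*d - b*c = 1 \<and> MM dvd c \<and> (e = 1 \<or> e = -1)"
  unfolding mp_Gamma0_def MM_eq by simp

lemma HH_mem: "((a,b,c,d),e) \<in> HH \<longleftrightarrow> a*d - b*c = 1 \<and> MM dvd c \<and> (e = 1 \<or> e = -1) \<and> even (a*c) \<and> even (b*d)"
  unfolding mp_Gamma_theta0_def GG_mem by auto

definition gm :: "nat \<Rightarrow> mat2" where
  "gm i = (if i = 2 then (1,1,0,1) else if i = 3 then (1,0,MM,1) else (1,0,0,1))"

definition gi :: "nat \<Rightarrow> mat2 \<times> int" where "gi i = (gm i, 1)"

lemma gi_GG: "gi i \<in> GG" by (simp add: gi_def gm_def GG_mem)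

lemma clsm_range: "clsm g \<in> {1,2,3}"
  by (cases g) auto

lemma clsm_gm: "i \<in> {1,2,3} \<Longrightarrow> clsm (gm i) = i"
  using MM_odd by (auto simp: gm_def)

lemma decomp_GG:
  assumes "x \<in> GG" shows "\<exists>k\<in>HH. mp_mult k (gi (clsm (fst x))) = x"
proof -
  obtain a b c d e where x: "x = ((a,b,c,d),e)" by (metis prod.collapse)
  have h: "a*d - b*c = 1" "MM dvd c" "e = 1 \<or> e = -1" using assms x GG_mem by auto
  have pat: "(odd a \<and> even b \<and> even c \<and> odd d) \<or> (even a \<and> odd b \<and> odd c \<and> even d) \<or>
         (odd a \<and> odd b \<and> even c \<and> odd d) \<or> (even a \<and> odd b \<and> odd c \<and> odd d) \<or>
         (odd a \<and> even b \<and> odd c \<and> odd d) \<or> (odd a \<and> odd b \<and> odd c \<and> even d)"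
    by (rule sl2_patterns[OF h(1)])
  have "clsm (a,b,c,d) \<in> {1,2,3}" by (rule clsm_range)
  then consider (c1) "clsm (a,b,c,d) = 1" | (c2) "clsm (a,b,c,d) = 2" | (c3) "clsm (a,b,c,d) = 3" by blast
  then show ?thesis
  proof cases
    case c1
    have m: "m2mult (a,b,c,d) (gm 1) = (a,b,c,d)" by (simp add: gm_def)
    define k where "k = ((a,b,c,d), e * cocycle (a,b,c,d) (gm 1))"
    have "mp_mult k (gm 1, 1) = x" unfolding k_def x by (rule decomp[OF m h(3)])
    moreover have "k \<in> HH" unfolding k_def HH_mem using h c1 clsm_1[OF h(1)] cocycle_pm[of "(a,b,c,d)" "gm 1"] by auto
    ultimately show ?thesis using c1 x by (auto simp: gi_def)
  next
    case c2
    have m: "m2mult (a, b - a, c, d - c) (gm 2) = (a,b,c,d)" by (simp add: gm_def)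
    define k where "k = ((a, b - a, c, d - c), e * cocycle (a, b - a, c, d - c) (gm 2))"
    have "mp_mult k (gm 2, 1) = x" unfolding k_def x by (rule decomp[OF m h(3)])
    moreover have det: "a*(d-c) - (b-a)*c = 1" using h(1) by (simp add: algebra_simps)
    moreover have "even (a*c) \<and> even ((b-a)*(d-c))" using pat c2 by auto
    ultimately have "k \<in> HH \<and> mp_mult k (gm 2, 1) = x"
      unfolding k_def HH_mem using h cocycle_pm[of "(a, b - a, c, d - c)" "gm 2"] by auto
    then show ?thesis using c2 x by (auto simp: gi_def)
  next
    case c3
    have m: "m2mult (a - b*MM, b, c - d*MM, d) (gm 3) = (a,b,c,d)" by (simp add: gm_def algebra_simps)
    define k where "k = ((a - b*MM, b, c - d*MM, d), e * cocycle (a - b*MM, b, c - d*MM, d) (gm 3))"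
    have "mp_mult k (gm 3, 1) = x" unfolding k_def x by (rule decomp[OF m h(3)])
    moreover have det: "(a - b*MM)*d - b*(c - d*MM) = 1" using h(1) by (simp add: algebra_simps)
    moreover have "MM dvd c - d*MM" using h(2) by simp
    moreover have "even ((a - b*MM)*(c - d*MM)) \<and> even (b*d)" using pat c3 MM_odd by auto
    ultimately have "k \<in> HH \<and> mp_mult k (gm 3, 1) = x"
      unfolding k_def HH_mem using h cocycle_pm[of "(a - b*MM, b, c - d*MM, d)" "gm 3"] by auto
    then show ?thesis using c3 x by (auto simp: gi_def)
  qed
qed

abbreviation "VV \<equiv> ind_space GG mp_mult HH sig"

lemma VV_eq: assumes "F \<in> VV" "h \<in> HH" "g \<in> GG" shows "F (mp_mult h g) = sig h * F g"
  using assms unfolding ind_space_def by blast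

lemma VV_out: assumes "F \<in> VV" "x \<notin> GG" shows "F x = 0"
  using assms unfolding ind_space_def by blast

lemma VV_vanish:
  assumes "F \<in> VV" "x \<in> GG" "F (gi (clsm (fst x))) = 0" shows "F x = 0"
proof -
  obtain k where k: "k \<in> HH" "mp_mult k (gi (clsm (fst x))) = x" using decomp_GG[OF assms(2)] by blast
  have "F x = sig k * F (gi (clsm (fst x)))" using VV_eq[OF assms(1) k(1) gi_GG[of "clsm (fst x)"]] k(2) by metis
  then show ?thesis using assms(3) by simp
qed

lemma VV_determ:
  assumes "F \<in> VV" "F' \<in> VV" "\<And>i. i \<in> {1,2,3} \<Longrightarrow> F (gi i) = F' (gi i)"
  shows "F = F'"
proof
  fix x show "F x = F' x"
  proof (cases "x \<in> GG")
    case False then show ?thesis using VV_out[OF assms(1) False] VV_out[OF assms(2) False] by simp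
  next
    case True
    obtain k where k: "k \<in> HH" "mp_mult k (gi (clsm (fst x))) = x" using decomp_GG[OF True] by blast
    have "F x = sig k * F (gi (clsm (fst x)))" using VV_eq[OF assms(1) k(1) gi_GG[of "clsm (fst x)"]] k(2) by metis
    also have "\<dots> = sig k * F' (gi (clsm (fst x)))" using assms(3) clsm_range by simp
    also have "\<dots> = F' x" using VV_eq[OF assms(2) k(1) gi_GG[of "clsm (fst x)"]] k(2) by metis
    finally show ?thesis .
  qed
qed


definition "t2 = ((1,2,0,1),1::int)"
definition "uu = ((1,0,2*MM,1),1::int)"
definition "h3 = ((1 - 2*MM, 2, -2*MM*MM, 1 + 2*MM),1::int)"
definition "h2 = ((1 + 2*MM, -2*MM, 2*MM, 1 - 2*MM),1::int)"
definition "Tinv = ((1,-1,0,1),1::int)"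
definition "Linv = ((1,0,-MM,1),1::int)"

lemma elems_GG: "t2 \<in> GG" "uu \<in> GG" "Tinv \<in> GG" "Linv \<in> GG"
  by (simp_all add: t2_def uu_def Tinv_def Linv_def GG_mem)

lemma elems_HH: "t2 \<in> HH" "uu \<in> HH" "h3 \<in> HH" "h2 \<in> HH"
proof -
  show "t2 \<in> HH" "uu \<in> HH" by (simp_all add: t2_def uu_def HH_mem)
  have "(1 - 2*MM)*(1 + 2*MM) - 2*(-2*MM*MM) = 1" by (simp add: algebra_simps)
  then show "h3 \<in> HH" by (simp add: h3_def HH_mem)
  have "(1 + 2*MM)*(1 - 2*MM) - (-2*MM)*(2*MM) = 1" by (simp add: algebra_simps)
  then show "h2 \<in> HH" by (simp add: h2_def HH_mem)
qed

lemma hil_pos1: "x > 0 \<Longrightarrow> hilbert_R x y = 1" by (simp add: hil_def')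
lemma hil_pos2: "y > 0 \<Longrightarrow> hilbert_R x y = 1" by (simp add: hil_def')

lemma prods:
  "mp_mult (gi 1) t2 = mp_mult t2 (gi 1)"
  "mp_mult (gi 2) t2 = mp_mult t2 (gi 2)"
  "mp_mult (gi 3) t2 = mp_mult h3 (gi 3)"
  "mp_mult (gi 1) uu = mp_mult uu (gi 1)"
  "mp_mult (gi 2) uu = mp_mult h2 (gi 2)"
  "mp_mult (gi 3) uu = mp_mult uu (gi 3)"
  "mp_mult (gi 2) Tinv = gi 1"
  "mp_mult (gi 3) Linv = gi 1"
  "mp_mult (gi 1) (gi 2) = gi 2"
  "mp_mult (gi 1) (gi 3) = gi 3"
  using MM_pos
  by (auto simp: gi_def gm_def t2_def uu_def h3_def h2_def Tinv_def Linv_def cocycle_def hil_pos1 hil_pos2 algebra_simps)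


lemma sig_t2: "sig t2 = 1" using chi_1 by (simp add: t2_def kron_0_1 eps_def)

lemma kron_x_1: "kronecker a 1 = 1" by (simp add: kronecker_def)

lemma sig_uu: "sig uu = 1" using chi_1 by (simp add: uu_def kron_x_1 eps_def)

lemma lambda_ne1:
  fixes a b c d :: int
  assumes "even c" "d mod 4 = 3" "\<chi> d = 1"
  shows "sig ((a,b,c,d),1) \<noteq> 1"
proof -
  have "lambda_bar \<chi> ((a,b,c,d),1) = of_int (kronecker (2*c) d) * inverse \<i>"
    using assms by (simp add: eps_def)
  also have "\<dots> = - \<i> * of_int (kronecker (2*c) d)" by simp
  finally have l: "lambda_bar \<chi> ((a,b,c,d),1) = - \<i> * of_int (kronecker (2*c) d)" .
  have "- \<i> * of_int (kronecker (2*c) d) \<noteq> (1::complex)" by (simp add: complex_eq_iff)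
  then show ?thesis using l by (metis inverse_1 inverse_inverse_eq)
qed

lemma sig_h3: "sig h3 \<noteq> 1"
proof -
  have "\<chi> (1 + 2*MM) = 1" using chi_per[of 1 "2 * int N"] chi_1 by (simp add: MM_N mult_ac)
  moreover have "(1 + 2*MM) mod 4 = 3" using MM_odd by presburger
  ultimately show ?thesis unfolding h3_def by (intro lambda_ne1) auto
qed

lemma sig_h2: "sig h2 \<noteq> 1"
proof -
  have "\<chi> (1 - 2*MM) = 1" using chi_per[of 1 "- 2 * int N"] chi_1 by (simp add: MM_N mult_ac)
  moreover have "(1 - 2*MM) mod 4 = 3" using MM_odd by presburger
  ultimately show ?thesis unfolding h2_def by (intro lambda_ne1) auto
qed

lemma clsm_prods:
  "clsm (fst (mp_mult (gi 1) Tinv)) = 2"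
  "clsm (fst (mp_mult (gi 3) Tinv)) = 3"
  "clsm (fst (mp_mult (gi 1) Linv)) = 3"
  "clsm (fst (mp_mult (gi 2) Linv)) = 2"
  "clsm (fst (mp_mult (gi 2) (gi 2))) = 1"
  "clsm (fst (mp_mult (gi 3) (gi 2))) = 3"
  "clsm (fst (mp_mult (gi 2) (gi 3))) = 2"
  "clsm (fst (mp_mult (gi 3) (gi 3))) = 1"
  using MM_odd by (auto simp: gi_def gm_def Tinv_def Linv_def)

definition rt :: "mat2 \<times> int \<Rightarrow> (mat2 \<times> int \<Rightarrow> complex) \<Rightarrow> (mat2 \<times> int \<Rightarrow> complex)" where
  "rt g F = right_transl GG mp_mult g F"

lemma rt_gi: "rt g F (gi i) = F (mp_mult (gi i) g)"
  using gi_GG by (simp add: rt_def right_transl_def)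

lemma gi_123: "gi 1 = gi (Suc 0)" by simp

lemma E_t2:
  assumes "F \<in> VV"
  shows "rt t2 F (gi 1) = F (gi 1)" "rt t2 F (gi 2) = F (gi 2)" "rt t2 F (gi 3) = sig h3 * F (gi 3)"
proof -
  show "rt t2 F (gi 1) = F (gi 1)" unfolding rt_gi prods(1) VV_eq[OF assms elems_HH(1) gi_GG] sig_t2 by simp
  show "rt t2 F (gi 2) = F (gi 2)" unfolding rt_gi prods(2) VV_eq[OF assms elems_HH(1) gi_GG] sig_t2 by simp
  show "rt t2 F (gi 3) = sig h3 * F (gi 3)" unfolding rt_gi prods(3) VV_eq[OF assms elems_HH(3) gi_GG] ..
qed

lemma E_uu:
  assumes "F \<in> VV"
  shows "rt uu F (gi 1) = F (gi 1)" "rt uu F (gi 2) = sig h2 * F (gi 2)" "rt uu F (gi 3) = F (gi 3)"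
proof -
  show "rt uu F (gi 1) = F (gi 1)" unfolding rt_gi prods(4) VV_eq[OF assms elems_HH(2) gi_GG] sig_uu by simp
  show "rt uu F (gi 2) = sig h2 * F (gi 2)" unfolding rt_gi prods(5) VV_eq[OF assms elems_HH(4) gi_GG] ..
  show "rt uu F (gi 3) = F (gi 3)" unfolding rt_gi prods(6) VV_eq[OF assms elems_HH(2) gi_GG] sig_uu by simp
qed

lemma prod_GG: "x \<in> GG \<Longrightarrow> y \<in> GG \<Longrightarrow> mp_mult x y \<in> GG"
  by (rule Gamma0_closed)

lemma E_Tinv:
  assumes "F \<in> VV" "F (gi 2) = 0" "F (gi 3) = 0"
  shows "rt Tinv F (gi 1) = 0" "rt Tinv F (gi 2) = F (gi 1)" "rt Tinv F (gi 3) = 0"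
proof -
  show "rt Tinv F (gi 1) = 0" unfolding rt_gi
    by (rule VV_vanish[OF assms(1) prod_GG[OF gi_GG elems_GG(3)]]) (unfold clsm_prods(1), rule assms(2))
  show "rt Tinv F (gi 2) = F (gi 1)" unfolding rt_gi prods ..
  show "rt Tinv F (gi 3) = 0" unfolding rt_gi
    by (rule VV_vanish[OF assms(1) prod_GG[OF gi_GG elems_GG(3)]]) (unfold clsm_prods(2), rule assms(3))
qed

lemma E_Linv:
  assumes "F \<in> VV" "F (gi 2) = 0" "F (gi 3) = 0"
  shows "rt Linv F (gi 1) = 0" "rt Linv F (gi 2) = 0" "rt Linv F (gi 3) = F (gi 1)"
proof -
  show "rt Linv F (gi 1) = 0" unfolding rt_gi
    by (rule VV_vanish[OF assms(1) prod_GG[OF gi_GG elems_GG(4)]]) (unfold clsm_prods(3), rule assms(3))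
  show "rt Linv F (gi 2) = 0" unfolding rt_gi
    by (rule VV_vanish[OF assms(1) prod_GG[OF gi_GG elems_GG(4)]]) (unfold clsm_prods(4), rule assms(2))
  show "rt Linv F (gi 3) = F (gi 1)" unfolding rt_gi prods ..
qed

lemma E_T:
  assumes "F \<in> VV" "F (gi 1) = 0" "F (gi 3) = 0"
  shows "rt (gi 2) F (gi 1) = F (gi 2)" "rt (gi 2) F (gi 2) = 0" "rt (gi 2) F (gi 3) = 0"
proof -
  show "rt (gi 2) F (gi 1) = F (gi 2)" unfolding rt_gi prods ..
  show "rt (gi 2) F (gi 2) = 0" unfolding rt_gi
    by (rule VV_vanish[OF assms(1) prod_GG[OF gi_GG gi_GG]]) (unfold clsm_prods(5), rule assms(2))
  show "rt (gi 2) F (gi 3) = 0" unfolding rt_gi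
    by (rule VV_vanish[OF assms(1) prod_GG[OF gi_GG gi_GG]]) (unfold clsm_prods(6), rule assms(3))
qed

lemma E_L:
  assumes "F \<in> VV" "F (gi 1) = 0" "F (gi 2) = 0"
  shows "rt (gi 3) F (gi 1) = F (gi 3)" "rt (gi 3) F (gi 2) = 0" "rt (gi 3) F (gi 3) = 0"
proof -
  show "rt (gi 3) F (gi 1) = F (gi 3)" unfolding rt_gi prods ..
  show "rt (gi 3) F (gi 2) = 0" unfolding rt_gi
    by (rule VV_vanish[OF assms(1) prod_GG[OF gi_GG gi_GG]]) (unfold clsm_prods(7), rule assms(3))
  show "rt (gi 3) F (gi 3) = 0" unfolding rt_gi
    by (rule VV_vanish[OF assms(1) prod_GG[OF gi_GG gi_GG]]) (unfold clsm_prods(8), rule assms(2))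
qed


lemma exists_psi:
  assumes sub: "W \<subseteq> VV"
    and lin: "\<And>F G a b. F \<in> W \<Longrightarrow> G \<in> W \<Longrightarrow> (\<lambda>x. a * F x + b * G x) \<in> W"
    and rtW: "\<And>g F. g \<in> GG \<Longrightarrow> F \<in> W \<Longrightarrow> rt g F \<in> W"
    and f: "f \<in> W" and nz: "f (gi 1) \<noteq> 0 \<or> f (gi 2) \<noteq> 0 \<or> f (gi 3) \<noteq> 0"
  shows "\<exists>\<psi>\<in>W. \<psi> (gi 1) \<noteq> 0 \<and> \<psi> (gi 2) = 0 \<and> \<psi> (gi 3) = 0"
proof -
  define \<alpha> where "\<alpha> = sig h3"
  define \<beta> where "\<beta> = sig h2"
  have a1: "\<alpha> \<noteq> 1" and b1: "\<beta> \<noteq> 1" using sig_h3 sig_h2 by (simp_all add: \<alpha>_def \<beta>_def)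
  have fV: "f \<in> VV" using f sub by blast
  define X where "X = (\<lambda>x. 1 * rt t2 f x + (-\<alpha>) * f x)"
  have XW: "X \<in> W" unfolding X_def by (intro lin rtW f elems_GG)
  have XV: "X \<in> VV" using XW sub by blast
  have X1: "X (gi 1) = (1 - \<alpha>) * f (gi 1)" unfolding X_def E_t2[OF fV] by (simp add: algebra_simps)
  have X2: "X (gi 2) = (1 - \<alpha>) * f (gi 2)" unfolding X_def E_t2[OF fV] by (simp add: algebra_simps)
  have X3: "X (gi 3) = 0" unfolding X_def E_t2[OF fV] \<alpha>_def by (simp add: algebra_simps)
  consider (c1) "f (gi 1) \<noteq> 0" | (c2) "f (gi 2) \<noteq> 0" | (c3) "f (gi 3) \<noteq> 0" using nz by blast
  then show ?thesis
  proof cases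
    case c1
    define P where "P = (\<lambda>x. 1 * rt uu X x + (-\<beta>) * X x)"
    have "P \<in> W" unfolding P_def by (intro lin rtW XW elems_GG)
    moreover have "P (gi 1) = (1 - \<beta>) * ((1 - \<alpha>) * f (gi 1))" unfolding P_def E_uu[OF XV] X1 by (simp add: algebra_simps)
    moreover have "P (gi 2) = 0" unfolding P_def E_uu[OF XV] \<beta>_def by (simp add: algebra_simps)
    moreover have "P (gi 3) = 0" unfolding P_def E_uu[OF XV] X3 by simp
    ultimately show ?thesis using a1 b1 c1 by (intro bexI[of _ P]) auto
  next
    case c2
    define P where "P = (\<lambda>x. 1 * rt uu X x + (-1) * X x)"
    have PW: "P \<in> W" unfolding P_def by (intro lin rtW XW elems_GG)
    have PV: "P \<in> VV" using PW sub by blast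
    have P1: "P (gi 1) = 0" unfolding P_def E_uu[OF XV] by simp
    have P2: "P (gi 2) = (\<beta> - 1) * ((1 - \<alpha>) * f (gi 2))" unfolding P_def E_uu[OF XV] X2 \<beta>_def by (simp add: algebra_simps)
    have P3: "P (gi 3) = 0" unfolding P_def E_uu[OF XV] X3 by simp
    have "rt (gi 2) P \<in> W" by (intro rtW PW gi_GG)
    moreover have "rt (gi 2) P (gi 1) \<noteq> 0" unfolding E_T[OF PV P1 P3] P2 using a1 b1 c2 by simp
    ultimately show ?thesis using E_T[OF PV P1 P3] by blast
  next
    case c3
    define P where "P = (\<lambda>x. 1 * rt t2 f x + (-1) * f x)"
    have PW: "P \<in> W" unfolding P_def by (intro lin rtW f elems_GG)
    have PV: "P \<in> VV" using PW sub by blast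
    have P1: "P (gi 1) = 0" unfolding P_def E_t2[OF fV] by simp
    have P2: "P (gi 2) = 0" unfolding P_def E_t2[OF fV] by simp
    have P3: "P (gi 3) = (\<alpha> - 1) * f (gi 3)" unfolding P_def E_t2[OF fV] \<alpha>_def by (simp add: algebra_simps)
    have "rt (gi 3) P \<in> W" by (intro rtW PW gi_GG)
    moreover have "rt (gi 3) P (gi 1) \<noteq> 0" unfolding E_L[OF PV P1 P2] P3 using a1 c3 by simp
    ultimately show ?thesis using E_L[OF PV P1 P2] by blast
  qed
qed

lemma irred:
  assumes inv: "invariant_subspace GG mp_mult VV W" and ne: "W \<noteq> {\<lambda>_. 0}"
  shows "W = VV"
proof -
  have sub: "W \<subseteq> VV" and z: "(\<lambda>_. 0) \<in> W"
    and add: "\<And>f f'. f \<in> W \<Longrightarrow> f' \<in> W \<Longrightarrow> (\<lambda>x. f x + f' x) \<in> W"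
    and smul: "\<And>c f. f \<in> W \<Longrightarrow> (\<lambda>x. c * f x) \<in> W"
    and tr: "\<And>g f. g \<in> GG \<Longrightarrow> f \<in> W \<Longrightarrow> right_transl GG mp_mult g f \<in> W"
    using inv unfolding invariant_subspace_def by blast+
  have lin: "(\<lambda>x. a * F x + b * G x) \<in> W" if "F \<in> W" "G \<in> W" for F G a b
    using add[OF smul[OF that(1), of a] smul[OF that(2), of b]] .
  have rtW: "rt g F \<in> W" if "g \<in> GG" "F \<in> W" for g F
    unfolding rt_def using tr that .
  obtain f where f: "f \<in> W" "f \<noteq> (\<lambda>_. 0)" using ne z by blast
  have fV: "f \<in> VV" using f sub by blast
  have zV: "(\<lambda>_. 0) \<in> VV" using z sub by blast
  have nz: "f (gi 1) \<noteq> 0 \<or> f (gi 2) \<noteq> 0 \<or> f (gi 3) \<noteq> 0"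
  proof (rule ccontr)
    assume "\<not> ?thesis"
    then have "\<And>i. i \<in> {1,2,3} \<Longrightarrow> f (gi i) = (\<lambda>_. 0) (gi i)" by auto
    then have "f = (\<lambda>_. 0)" by (rule VV_determ[OF fV zV])
    then show False using f(2) by simp
  qed
  obtain \<psi> where psi: "\<psi> \<in> W" "\<psi> (gi 1) \<noteq> 0" "\<psi> (gi 2) = 0" "\<psi> (gi 3) = 0"
    using exists_psi[OF sub lin rtW f(1) nz] by blast
  have psiV: "\<psi> \<in> VV" using psi sub by blast
  define \<psi>2 where "\<psi>2 = rt Tinv \<psi>"
  define \<psi>3 where "\<psi>3 = rt Linv \<psi>"
  have W2: "\<psi>2 \<in> W" "\<psi>3 \<in> W" unfolding \<psi>2_def \<psi>3_def using rtW psi(1) elems_GG by blast+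
  note v2 = E_Tinv[OF psiV psi(3,4), folded \<psi>2_def]
  note v3 = E_Linv[OF psiV psi(3,4), folded \<psi>3_def]
  show ?thesis
  proof
    show "W \<subseteq> VV" by (rule sub)
    show "VV \<subseteq> W"
    proof
      fix F assume FV: "F \<in> VV"
      define c where "c = \<psi> (gi 1)"
      have c0: "c \<noteq> 0" using psi(2) c_def by simp
      define \<Phi> where "\<Phi> = (\<lambda>x. (F (gi 1) / c) * \<psi> x + 1 * (\<lambda>x. (F (gi 2) / c) * \<psi>2 x + (F (gi 3) / c) * \<psi>3 x) x)"
      have PW: "\<Phi> \<in> W" unfolding \<Phi>_def by (intro lin psi(1) W2)
      have PV: "\<Phi> \<in> VV" using PW sub by blast
      have "F = \<Phi>"
      proof (rule VV_determ[OF FV PV])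
        fix i :: nat assume "i \<in> {1,2,3}"
        then consider "i = 1" | "i = 2" | "i = 3" by blast
        then show "F (gi i) = \<Phi> (gi i)"
        proof cases
          case 1 show ?thesis unfolding 1 \<Phi>_def v2(1) v3(1) c_def[symmetric] using c0 by simp
        next
          case 2 show ?thesis unfolding 2 \<Phi>_def v2(2) v3(2) psi(3) c_def[symmetric] using c0 by simp
        next
          case 3 show ?thesis unfolding 3 \<Phi>_def v2(3) v3(3) psi(4) c_def[symmetric] using c0 by simp
        qed
      qed
      then show "F \<in> W" using PW by simp
    qed
  qed
qed

end


theorem mainTheorem10:
  fixes N :: nat and \<chi> :: "int \<Rightarrow> complex"
  assumes "N \<ge> 1" and "odd N"
    and "primitive_dirichlet_character N \<chi>"
  shows "irreducible_ind_rep (mp_Gamma0 (N^2)) mp_mult (mp_Gamma_theta0 (N^2))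
           (\<lambda>h. inverse (lambda_bar \<chi> h))"
proof -
  have dc: "dirichlet_character N \<chi>" using assms(3) by (simp add: primitive_dirichlet_character_def)
  interpret indctx N \<chi> using assms(1,2) dc by unfold_locales
  have "ind_space (mp_Gamma0 (N^2)) mp_mult (mp_Gamma_theta0 (N^2)) (\<lambda>h. inverse (lambda_bar \<chi> h)) \<noteq> {\<lambda>_. 0}"
    using f0_in f0_nonzero by blast
  then show ?thesis unfolding irreducible_ind_rep_def Let_def using irred by blast
qed

end
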